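(* Let $\mathbb{H}$ be a real Hilbert space and $0\neq T\in\mathbb{B}(\mathbb{H})$. Then the following are equivalent: (i) $T$ is a smooth point of $\mathbb{B}(\mathbb{H})$. (ii) $M_T=\{\pm x_0\}$ for some $x_0\in S_{\mathbb{H}}$, and $\|T|_{H_0}\|<\|T\|$, where $H_0=\{x_0\}^{\perp}$ is the orthogonal complement of $x_0$. (iii) For every $A\in\mathbb{B}(\mathbb{H})$: $T\perp_B A$ if and only if for every norming sequence $\{x_n\}$ for $T$, every subsequential limit of $\{\langle Ax_n,Tx_n\rangle\}$ equals $0$.
   Context: $\mathbb{B}(\mathbb{H})$ carries the operator norm; $S_{\mathbb{H}}$ is the unit sphere; $M_T=\{x\in S_{\mathbb{H}}:\|Tx\|=\|T\|\}$. A nonzero element $x$ of a normed space $\mathbb{Z}$ is smooth if there is a unique $f\in\mathbb{Z}^*$ with $\|f\|=1$, $f(x)=\|x\|$. $S\perp_B A$ means $\|S+\lambda A\|\ge\|S\|$ for all real $\lambda$. A norming sequence for $T$ is $\{x_n\}\subseteq S_{\mathbb{H}}$ with $\|Tx_n\|\to\|T\|$. *)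

theory Defs
  imports "HOL-Analysis.Analysis"
begin

definition smooth_point :: "'z::real_normed_vector \<Rightarrow> bool" where
  "smooth_point x \<longleftrightarrow> x \<noteq> 0 \<and>
     (\<exists>!f :: 'z \<Rightarrow>\<^sub>L real. norm f = 1 \<and> blinfun_apply f x = norm x)"

definition norm_attain :: "('a::real_normed_vector \<Rightarrow>\<^sub>L 'b::real_normed_vector) \<Rightarrow> 'a set" where
  "norm_attain T = {x. norm x = 1 \<and> norm (blinfun_apply T x) = norm T}"

definition birkhoff_orth :: "'z::real_normed_vector \<Rightarrow> 'z \<Rightarrow> bool" where
  "birkhoff_orth S A \<longleftrightarrow> (\<forall>t::real. norm (S + t *\<^sub>R A) \<ge> norm S)"

definition restr_norm :: "('a::real_normed_vector \<Rightarrow>\<^sub>L 'b::real_normed_vector) \<Rightarrow> 'a set \<Rightarrow> real" where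
  "restr_norm T V = Sup {norm (blinfun_apply T x) | x. x \<in> V \<and> norm x \<le> 1}"

definition norming_seq :: "('a::real_normed_vector \<Rightarrow>\<^sub>L 'b::real_normed_vector) \<Rightarrow> (nat \<Rightarrow> 'a) \<Rightarrow> bool" where
  "norming_seq T xs \<longleftrightarrow> (\<forall>n. norm (xs n) = 1) \<and> (\<lambda>n. norm (blinfun_apply T (xs n))) \<longlonglongrightarrow> norm T"

definition subseq_limit :: "(nat \<Rightarrow> real) \<Rightarrow> real \<Rightarrow> bool" where
  "subseq_limit s l \<longleftrightarrow> (\<exists>r. strict_mono r \<and> (s \<circ> r) \<longlonglongrightarrow> l)"

end

theory Submission
  imports Defs
begin

definition ultra :: "nat filter \<Rightarrow> bool" where
 "ultra U \<longleftrightarrow> U \<noteq> bot \<and> U \<le> sequentially \<and> (\<forall>P. eventually P U \<or> eventually (\<lambda>n. \<not> P n) U)"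

definition goodfam :: "nat set set \<Rightarrow> bool" where
 "goodfam M \<longleftrightarrow> (\<forall>X\<in>M. X \<noteq> {}) \<and> (\<forall>X\<in>M. \<forall>Y\<in>M. X \<inter> Y \<in> M)
      \<and> (\<forall>X\<in>M. \<forall>Y. X \<subseteq> Y \<longrightarrow> Y \<in> M) \<and> (\<forall>N. {N..} \<in> M)"

lemma maxfam_exists: "\<exists>M. goodfam M \<and> (\<forall>M'. goodfam M' \<and> M \<subseteq> M' \<longrightarrow> M' = M)"
proof -
  let ?A = "{M. goodfam M}"
  have "\<forall>C\<in>chains ?A. \<exists>U\<in>?A. \<forall>X\<in>C. X \<subseteq> U"
  proof
    fix C assume C: "C \<in> chains ?A"
    show "\<exists>U\<in>?A. \<forall>X\<in>C. X \<subseteq> U"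
    proof (cases "C = {}")
      case True
      have "goodfam {X::nat set. \<exists>N. {N..} \<subseteq> X}"
        unfolding goodfam_def
      proof (intro conjI ballI allI impI)
        fix X :: "nat set" assume "X \<in> {X. \<exists>N. {N..} \<subseteq> X}"
        then obtain N where "{N..} \<subseteq> X" by auto
        then have "N \<in> X" by auto
        then show "X \<noteq> {}" by auto
      next
        fix X Y :: "nat set" assume "X \<in> {X. \<exists>N. {N..} \<subseteq> X}" "Y \<in> {X. \<exists>N. {N..} \<subseteq> X}"
        then obtain N1 N2 where "{N1..} \<subseteq> X" "{N2..} \<subseteq> Y" by auto
        then have "{max N1 N2..} \<subseteq> X \<inter> Y" by auto
        then show "X \<inter> Y \<in> {X. \<exists>N. {N..} \<subseteq> X}" by blast
      qed auto
      then show ?thesis using True by auto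
    next
      case False
      have ch: "\<forall>X\<in>C. \<forall>Y\<in>C. X \<subseteq> Y \<or> Y \<subseteq> X" and sub: "C \<subseteq> ?A"
        using C unfolding chains_def chain_subset_def by auto
      have "goodfam (\<Union>C)"
        unfolding goodfam_def
      proof (intro conjI ballI allI impI)
        fix X assume "X \<in> \<Union>C"
        then obtain M1 where "M1 \<in> C" "X \<in> M1" by auto
        then show "X \<noteq> {}" using sub unfolding goodfam_def by auto
      next
        fix X Y assume "X \<in> \<Union>C" "Y \<in> \<Union>C"
        then obtain M1 M2 where m: "M1 \<in> C" "M2 \<in> C" "X \<in> M1" "Y \<in> M2" by auto
        have g1: "goodfam M1" "goodfam M2" using m sub by auto
        from m ch have "M1 \<subseteq> M2 \<or> M2 \<subseteq> M1" by blast
        then show "X \<inter> Y \<in> \<Union>C"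
        proof
          assume "M1 \<subseteq> M2"
          then have "X \<inter> Y \<in> M2" using g1(2) m unfolding goodfam_def by blast
          then show ?thesis using m by blast
        next
          assume "M2 \<subseteq> M1"
          then have "X \<inter> Y \<in> M1" using g1(1) m unfolding goodfam_def by blast
          then show ?thesis using m by blast
        qed
      next
        fix X Y assume "X \<in> \<Union>C" "X \<subseteq> Y"
        then obtain M1 where "M1 \<in> C" "X \<in> M1" by auto
        then have "Y \<in> M1" using sub \<open>X \<subseteq> Y\<close> unfolding goodfam_def by auto
        then show "Y \<in> \<Union>C" using \<open>M1 \<in> C\<close> by auto
      next
        fix N obtain M1 where "M1 \<in> C" using False by auto
        then show "{N..} \<in> \<Union>C" using sub unfolding goodfam_def by auto
      qed
      then show ?thesis by auto
    qed
  qed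
  from Zorn_Lemma2[OF this] show ?thesis by blast
qed

lemma ultra_exists: "\<exists>U. ultra U"
proof -
  obtain M where gM: "goodfam M" and mx: "\<And>M'. goodfam M' \<Longrightarrow> M \<subseteq> M' \<Longrightarrow> M' = M"
    using maxfam_exists by blast
  have ne: "\<And>X. X \<in> M \<Longrightarrow> X \<noteq> {}" and it: "\<And>X Y. X \<in> M \<Longrightarrow> Y \<in> M \<Longrightarrow> X \<inter> Y \<in> M"
   and up: "\<And>X Y. X \<in> M \<Longrightarrow> X \<subseteq> Y \<Longrightarrow> Y \<in> M" and tl: "\<And>N. {N..} \<in> M"
    using gM unfolding goodfam_def by blast+
  have univ: "UNIV \<in> M" using up[OF tl[of 0]] by auto
  have ult: "E \<in> M \<or> - E \<in> M" for E
  proof (rule ccontr)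
    assume nE: "\<not> (E \<in> M \<or> - E \<in> M)"
    show False
    proof (cases "\<exists>X\<in>M. E \<inter> X = {}")
      case True
      then obtain X where "X \<in> M" "X \<subseteq> -E" by auto
      then show False using up nE by blast
    next
      case False
      let ?M' = "{Y. \<exists>X\<in>M. E \<inter> X \<subseteq> Y}"
      have "goodfam ?M'" unfolding goodfam_def
      proof (intro conjI ballI allI impI)
        fix Y assume "Y \<in> ?M'" then show "Y \<noteq> {}" using False by blast
      next
        fix Y1 Y2 assume "Y1 \<in> ?M'" "Y2 \<in> ?M'"
        then obtain X1 X2 where "X1 \<in> M" "X2 \<in> M" "E \<inter> X1 \<subseteq> Y1" "E \<inter> X2 \<subseteq> Y2" by auto
        then have "X1 \<inter> X2 \<in> M" "E \<inter> (X1 \<inter> X2) \<subseteq> Y1 \<inter> Y2" using it by auto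
        then show "Y1 \<inter> Y2 \<in> ?M'" by blast
      next
        fix X Y assume "X \<in> ?M'" "X \<subseteq> Y" then show "Y \<in> ?M'" by blast
      next
        fix N show "{N..} \<in> ?M'" using tl by blast
      qed
      moreover have "M \<subseteq> ?M'" by blast
      ultimately have "?M' = M" using mx by blast
      moreover have "E \<in> ?M'" using univ by blast
      ultimately show False using nE by blast
    qed
  qed
  have isf: "is_filter (\<lambda>P. {n. P n} \<in> M)"
  proof
    show "{n. True} \<in> M" using univ by simp
  next
    fix P Q assume "{n. P n} \<in> M" "{n. Q n} \<in> M"
    then have "{n. P n} \<inter> {n. Q n} \<in> M" by (rule it)
    then show "{n. P n \<and> Q n} \<in> M" by (simp add: Collect_conj_eq)
  next
    fix P Q assume "\<forall>x. P x \<longrightarrow> Q x" "{n. P n} \<in> M"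
    then show "{n. Q n} \<in> M" using up by blast
  qed
  define U where "U = Abs_filter (\<lambda>P. {n. P n} \<in> M)"
  have ev: "eventually P U \<longleftrightarrow> {n. P n} \<in> M" for P
    unfolding U_def by (rule eventually_Abs_filter[OF isf])
  have "U \<noteq> bot"
  proof
    assume "U = bot"
    then have "eventually (\<lambda>n. False) U" by simp
    then show False using ev ne by auto
  qed
  moreover have "U \<le> sequentially"
  proof (rule filter_leI)
    fix P assume "eventually P sequentially"
    then obtain N where "\<forall>n\<ge>N. P n" by (auto simp: eventually_sequentially)
    then have "{N..} \<subseteq> {n. P n}" by auto
    then show "eventually P U" using ev up tl by blast
  qed
  moreover have "eventually P U \<or> eventually (\<lambda>n. \<not> P n) U" for P
    using ult[of "{n. P n}"] ev by (simp add: Collect_neg_eq)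
  ultimately show ?thesis unfolding ultra_def by blast
qed

lemma ultra_lim_exists:
  fixes s :: "nat \<Rightarrow> real"
  assumes U: "ultra U" and b: "\<And>n. \<bar>s n\<bar> \<le> K"
  shows "\<exists>l. (s \<longlongrightarrow> l) U"
proof -
  have nb: "U \<noteq> bot" and ul: "\<And>P. eventually P U \<or> eventually (\<lambda>n. \<not> P n) U"
    using U unfolding ultra_def by auto
  let ?A = "{a. eventually (\<lambda>n. a \<le> s n) U}"
  have "-K \<le> s n" for n proof - have "\<bar>s n\<bar> \<le> K" by (rule b) then show ?thesis by linarith qed
  then have neA: "-K \<in> ?A" by (auto intro!: always_eventually)
  have bdA: "a \<le> K" if "a \<in> ?A" for a
  proof (rule ccontr)
    assume "\<not> a \<le> K"
    then have "eventually (\<lambda>n. False) U"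
      using that b by (auto elim!: eventually_mono simp: abs_le_iff) (meson order_trans)
    then show False using nb by (simp add: eventually_False)
  qed
  have bdd: "bdd_above ?A" using bdA by (auto simp: bdd_above_def)
  define l where "l = Sup ?A"
  have "(s \<longlongrightarrow> l) U"
  proof (rule order_tendstoI)
    fix a assume "a < l"
    then obtain b where "b \<in> ?A" "a < b" unfolding l_def using less_cSup_iff[of ?A a] neA bdd by blast
    then show "eventually (\<lambda>n. a < s n) U" by (auto elim!: eventually_mono)
  next
    fix a assume "l < a"
    then have "a \<notin> ?A" unfolding l_def using cSup_upper[OF _ bdd] by force
    then have "eventually (\<lambda>n. \<not> a \<le> s n) U" using ul by auto
    then show "eventually (\<lambda>n. s n < a) U" by (auto elim!: eventually_mono)
  qed
  then show ?thesis by blast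
qed

definition ulim :: "nat filter \<Rightarrow> (nat \<Rightarrow> real) \<Rightarrow> real" where
  "ulim U s = (THE l. (s \<longlongrightarrow> l) U)"

lemma ulim_eq:
  assumes U: "ultra U" and t: "(s \<longlongrightarrow> l) U" shows "ulim U s = l"
proof -
  have nb: "U \<noteq> bot" using U unfolding ultra_def by auto
  show ?thesis unfolding ulim_def
  proof (rule the_equality)
    show "(s \<longlongrightarrow> l) U" by (rule t)
  next
    fix l' assume "(s \<longlongrightarrow> l') U" then show "l' = l" using tendsto_unique[OF nb] t by blast
  qed
qed

lemma ulim_tendsto:
  fixes s :: "nat \<Rightarrow> real"
  assumes U: "ultra U" and b: "\<And>n. \<bar>s n\<bar> \<le> K"
  shows "(s \<longlongrightarrow> ulim U s) U"
proof -
  obtain l where "(s \<longlongrightarrow> l) U" using ultra_lim_exists[of U s K] U b by blast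
  moreover then have "ulim U s = l" by (rule ulim_eq[OF U])
  ultimately show ?thesis by simp
qed

lemma ultra_seq:
  assumes U: "ultra U" and "s \<longlonglongrightarrow> l" shows "(s \<longlongrightarrow> l) U"
  using assms filterlim_mono unfolding ultra_def by blast

lemma lin_quad_zero:
  fixes b K :: real
  assumes "\<And>s. s * b \<le> K * s^2"
  shows "b = 0"
proof -
  define m where "m = \<bar>K\<bar> + 1"
  have m: "m > 0" "\<bar>K\<bar> < m" unfolding m_def by auto
  have "(b/m) * b \<le> K * (b/m)^2" by (rule assms)
  also have "\<dots> \<le> \<bar>K\<bar> * (b/m)^2" by (intro mult_right_mono) auto
  finally have "b^2 / m \<le> \<bar>K\<bar> * b^2 / m^2" by (simp add: power2_eq_square power_divide)
  then have "b^2 * m \<le> \<bar>K\<bar> * b^2" using m by (simp add: field_simps power2_eq_square)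
  then have "b^2 * (m - \<bar>K\<bar>) \<le> 0" by (simp add: algebra_simps)
  then have "b^2 \<le> 0" using m by (simp add: mult_le_0_iff)
  then show ?thesis by simp
qed

lemma unit_bound:
  fixes B :: "'a::real_normed_vector \<Rightarrow>\<^sub>L 'b::real_normed_vector"
  assumes "\<And>u. norm u = 1 \<Longrightarrow> norm (blinfun_apply B u) \<le> M" and "0 \<le> M"
  shows "norm B \<le> M"
proof (rule norm_blinfun_bound[OF assms(2)])
  fix x
  show "norm (blinfun_apply B x) \<le> M * norm x"
  proof (cases "x = 0")
    case True then show ?thesis by simp
  next
    case False
    have "norm (blinfun_apply B (x /\<^sub>R norm x)) \<le> M" using False by (intro assms(1)) simp
    then have "norm (blinfun_apply B x) / norm x \<le> M"
      by (simp add: blinfun.scaleR_right divide_inverse_commute)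
    then show ?thesis using False by (simp add: divide_le_eq mult.commute)
  qed
qed

lemma unit_le_norm:
  fixes B :: "'a::real_normed_vector \<Rightarrow>\<^sub>L 'b::real_normed_vector"
  assumes "norm u = 1" shows "norm (blinfun_apply B u) \<le> norm B"
  using norm_blinfun[of B u] assms by simp

lemma near_norm:
  fixes T :: "'a::real_normed_vector \<Rightarrow>\<^sub>L 'b::real_normed_vector"
  assumes "T \<noteq> 0" "e > 0"
  shows "\<exists>u. norm u = 1 \<and> norm T - e < norm (blinfun_apply T u)"
proof -
  define e' where "e' = min e (norm T / 2)"
  have T0: "norm T > 0" using assms by simp
  have h2: "norm T / 2 < norm T" "norm T / 2 > 0" using T0 by auto
  have e': "e' > 0" "e' \<le> e" "norm T - e' > 0" using assms(2) h2 unfolding e'_def by linarith+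
  have bdd: "bdd_above (range (\<lambda>x. norm (blinfun_apply T x) / norm x))"
    using le_onorm[OF blinfun.bounded_linear_right[of T]] by (auto simp: bdd_above_def)
  have "norm T - e' < onorm (blinfun_apply T)" using e' by (simp add: norm_blinfun.rep_eq)
  then obtain x where x: "norm T - e' < norm (blinfun_apply T x) / norm x"
    unfolding onorm_def using less_cSUP_iff[OF _ bdd] by auto
  have "x \<noteq> 0" using x e' by (auto)
  then have "norm (x /\<^sub>R norm x) = 1" by simp
  moreover have "norm (blinfun_apply T (x /\<^sub>R norm x)) = norm (blinfun_apply T x) / norm x"
    by (simp add: blinfun.scaleR_right divide_inverse_commute)
  ultimately show ?thesis using x e' by (intro exI[of _ "x /\<^sub>R norm x"]) auto
qed

lemma norming_exists:
  fixes T :: "'a::real_normed_vector \<Rightarrow>\<^sub>L 'b::real_normed_vector"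
  assumes "T \<noteq> 0"
  shows "\<exists>xs. norming_seq T xs"
proof -
  have "\<forall>n. \<exists>u. norm u = 1 \<and> norm T - inverse (real (Suc n)) < norm (blinfun_apply T u)"
    using near_norm[OF assms] by simp
  then obtain xs where xs: "\<And>n. norm (xs n) = 1"
    "\<And>n. norm T - inverse (real (Suc n)) < norm (blinfun_apply T (xs n))" by metis
  have "(\<lambda>n. norm (blinfun_apply T (xs n))) \<longlonglongrightarrow> norm T"
  proof (rule real_tendsto_sandwich)
    show "\<forall>\<^sub>F n in sequentially. norm T - inverse (real (Suc n)) \<le> norm (blinfun_apply T (xs n))"
      using xs(2) by (auto intro!: always_eventually less_imp_le)
    show "\<forall>\<^sub>F n in sequentially. norm (blinfun_apply T (xs n)) \<le> norm T"
      using unit_le_norm xs(1) by (auto intro!: always_eventually)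
    show "(\<lambda>n. norm T - inverse (real (Suc n))) \<longlonglongrightarrow> norm T"
      using tendsto_diff[OF tendsto_const LIMSEQ_inverse_real_of_nat, of "norm T"] by simp
  qed simp
  then show ?thesis using xs(1) unfolding norming_seq_def by blast
qed

lemma norm_add_sq:
  fixes a b :: "'a::real_inner"
  shows "(norm (a + b))^2 = (norm a)^2 + 2 * inner a b + (norm b)^2"
  by (simp add: power2_norm_eq_inner inner_add_left inner_add_right inner_commute)

lemma norm_diff_sq:
  fixes a b :: "'a::real_inner"
  shows "(norm (a - b))^2 = (norm a)^2 - 2 * inner a b + (norm b)^2"
  by (simp add: power2_norm_eq_inner inner_diff_left inner_diff_right inner_commute)

lemma norm_sq_le_bound:
  fixes T :: "'a::real_normed_vector \<Rightarrow>\<^sub>L 'b::real_normed_vector"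
  shows "(norm (blinfun_apply T x))^2 \<le> (norm T)^2 * (norm x)^2"
  using norm_blinfun[of T x] by (metis norm_ge_zero power_mono power_mult_distrib)

definition Qf :: "('a::real_normed_vector \<Rightarrow>\<^sub>L 'b::real_normed_vector) \<Rightarrow> 'a \<Rightarrow> real" where
  "Qf T x = (norm T)^2 * (norm x)^2 - (norm (blinfun_apply T x))^2"

lemma Qf_nonneg: "Qf T x \<ge> 0"
  unfolding Qf_def using norm_sq_le_bound[of T x] by simp

lemma Qf_add_le:
  fixes T :: "'a::real_inner \<Rightarrow>\<^sub>L 'b::real_inner"
  shows "Qf T (x + y) \<le> 2 * Qf T x + 2 * Qf T y"
proof -
  have "Qf T (x + y) + Qf T (x - y) = 2 * Qf T x + 2 * Qf T y"
    unfolding Qf_def blinfun.add_right blinfun.diff_right norm_add_sq norm_diff_sq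
    by (simp add: algebra_simps)
  then show ?thesis using Qf_nonneg[of T "x - y"] by simp
qed

lemma Qf_scale:
  fixes T :: "'a::real_normed_vector \<Rightarrow>\<^sub>L 'b::real_normed_vector"
  shows "Qf T (c *\<^sub>R x) = c^2 * Qf T x"
  unfolding Qf_def by (simp add: blinfun.scaleR_right power_mult_distrib algebra_simps)

lemma Qf_unit:
  assumes "norm x = 1" shows "(norm (blinfun_apply T x))^2 = (norm T)^2 - Qf T x"
  unfolding Qf_def using assms by simp

lemma norming_Qf:
  fixes T :: "'a::real_normed_vector \<Rightarrow>\<^sub>L 'b::real_normed_vector"
  assumes "\<And>n. norm (xs n) = 1" "(\<lambda>n. Qf T (xs n)) \<longlonglongrightarrow> 0"
  shows "norming_seq T xs"
proof -
  have "(\<lambda>n. sqrt ((norm T)^2 - Qf T (xs n))) \<longlonglongrightarrow> sqrt ((norm T)^2 - 0)"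
    by (intro tendsto_intros assms)
  moreover have "sqrt ((norm T)^2 - Qf T (xs n)) = norm (blinfun_apply T (xs n))" for n
    using Qf_unit[OF assms(1)[of n], of T] by (metis norm_ge_zero real_sqrt_abs abs_of_nonneg power2_eq_square real_sqrt_mult_self)
  ultimately show ?thesis unfolding norming_seq_def using assms(1) by simp
qed

lemma norming_Qf_conv:
  fixes T :: "'a::real_normed_vector \<Rightarrow>\<^sub>L 'b::real_normed_vector"
  assumes "norming_seq T xs"
  shows "(\<lambda>n. Qf T (xs n)) \<longlonglongrightarrow> 0"
proof -
  have u: "\<And>n. norm (xs n) = 1" and t: "(\<lambda>n. norm (blinfun_apply T (xs n))) \<longlonglongrightarrow> norm T"
    using assms unfolding norming_seq_def by auto
  have "(\<lambda>n. (norm T)^2 - (norm (blinfun_apply T (xs n)))^2) \<longlonglongrightarrow> (norm T)^2 - (norm T)^2"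
    by (intro tendsto_intros t)
  moreover have "Qf T (xs n) = (norm T)^2 - (norm (blinfun_apply T (xs n)))^2" for n
    unfolding Qf_def using u by simp
  ultimately show ?thesis by simp
qed

context
  fixes T :: "'a::{real_inner,complete_space} \<Rightarrow>\<^sub>L 'a" and x0 :: 'a
  assumes x0: "norm x0 = 1" and MT: "norm_attain T = {x0, -x0}"
    and clt: "restr_norm T {x. inner x x0 = 0} < norm T"
begin

lemma G0: "norm (blinfun_apply T x0) = norm T"
  using MT unfolding norm_attain_def by auto

lemma G_bdd: "bdd_above {norm (blinfun_apply T x) | x. x \<in> {x. inner x x0 = 0} \<and> norm x \<le> 1}"
  unfolding bdd_above_def
proof (rule exI[of _ "norm T"], safe)
  fix x :: 'a assume "norm x \<le> 1"
  have "norm (blinfun_apply T x) \<le> norm T * norm x" by (rule norm_blinfun)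
  also have "\<dots> \<le> norm T" using \<open>norm x \<le> 1\<close> by (simp add: mult_left_le)
  finally show "norm (blinfun_apply T x) \<le> norm T" .
qed

lemma G_c0: "0 \<le> restr_norm T {x. inner x x0 = 0}"
proof -
  have "(0::real) \<in> {norm (blinfun_apply T x) | x. x \<in> {x. inner x x0 = 0} \<and> norm x \<le> 1}"
    by (auto intro!: exI[of _ 0])
  from cSup_upper[OF this G_bdd] show ?thesis unfolding restr_norm_def .
qed

lemma G_c:
  assumes "inner y x0 = 0"
  shows "norm (blinfun_apply T y) \<le> restr_norm T {x. inner x x0 = 0} * norm y"
proof (cases "y = 0")
  case True then show ?thesis by simp
next
  case False
  have "norm (blinfun_apply T (y /\<^sub>R norm y)) \<le> restr_norm T {x. inner x x0 = 0}"
    unfolding restr_norm_def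
    by (rule cSup_upper[OF _ G_bdd]) (use assms False in auto)
  then have "norm (blinfun_apply T y) / norm y \<le> restr_norm T {x. inner x x0 = 0}"
    by (simp add: blinfun.scaleR_right divide_inverse_commute)
  then show ?thesis using False by (simp add: divide_le_eq mult.commute)
qed

lemma G_tau: "norm T > 0"
  using G_c0 clt by linarith

lemma G1:
  assumes "inner y x0 = 0"
  shows "inner (blinfun_apply T x0) (blinfun_apply T y) = 0"
proof -
  let ?b = "inner (blinfun_apply T x0) (blinfun_apply T y)"
  have "s * (2 * ?b) \<le> ((norm T)^2 * (norm y)^2 - (norm (blinfun_apply T y))^2) * s^2" for s
  proof -
    have "(norm (blinfun_apply T (x0 + s *\<^sub>R y)))^2 \<le> (norm T)^2 * (norm (x0 + s *\<^sub>R y))^2"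
      by (rule norm_sq_le_bound)
    moreover have "(norm (blinfun_apply T (x0 + s *\<^sub>R y)))^2
        = (norm T)^2 + 2 * (s * ?b) + s^2 * (norm (blinfun_apply T y))^2"
      unfolding blinfun.add_right blinfun.scaleR_right norm_add_sq G0
      by (simp add: power_mult_distrib)
    moreover have "(norm (x0 + s *\<^sub>R y))^2 = 1 + s^2 * (norm y)^2"
      unfolding norm_add_sq using assms x0 by (simp add: inner_commute power_mult_distrib)
    ultimately show ?thesis by (simp add: algebra_simps)
  qed
  then show ?thesis using lin_quad_zero by force
qed

lemma G_decomp:
  fixes x :: 'a
  defines "\<alpha> \<equiv> inner x x0"
  shows "inner (x - \<alpha> *\<^sub>R x0) x0 = 0"
    and "(norm x)^2 = \<alpha>^2 + (norm (x - \<alpha> *\<^sub>R x0))^2"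
    and "(norm (blinfun_apply T x))^2 = \<alpha>^2 * (norm T)^2 + (norm (blinfun_apply T (x - \<alpha> *\<^sub>R x0)))^2"
proof -
  have ix: "inner x0 x0 = 1" using x0 by (simp add: power2_norm_eq_inner[symmetric])
  show y0: "inner (x - \<alpha> *\<^sub>R x0) x0 = 0" unfolding \<alpha>_def by (simp add: inner_diff_left ix)
  have xe: "x = \<alpha> *\<^sub>R x0 + (x - \<alpha> *\<^sub>R x0)" by simp
  have "(norm x)^2 = (norm (\<alpha> *\<^sub>R x0 + (x - \<alpha> *\<^sub>R x0)))^2" by simp
  also have "\<dots> = \<alpha>^2 + (norm (x - \<alpha> *\<^sub>R x0))^2"
    unfolding norm_add_sq using y0 x0 by (simp add: inner_commute power_mult_distrib)
  finally show "(norm x)^2 = \<alpha>^2 + (norm (x - \<alpha> *\<^sub>R x0))^2" .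
  have "(norm (blinfun_apply T x))^2 = (norm (blinfun_apply T (\<alpha> *\<^sub>R x0 + (x - \<alpha> *\<^sub>R x0))))^2" by simp
  also have "\<dots> = \<alpha>^2 * (norm T)^2 + (norm (blinfun_apply T (x - \<alpha> *\<^sub>R x0)))^2"
    unfolding blinfun.add_right blinfun.scaleR_right norm_add_sq G0 inner_scaleR_left G1[OF y0]
    by (simp add: power_mult_distrib G0)
  finally show "(norm (blinfun_apply T x))^2 = \<alpha>^2 * (norm T)^2 + (norm (blinfun_apply T (x - \<alpha> *\<^sub>R x0)))^2" .
qed

lemma amgm_aux:
  fixes d s t L :: real
  assumes "d > 0" "s \<ge> 0"
  shows "2 * \<bar>t\<bar> * s * L - d * s^2 \<le> t^2 * L^2 / d"
proof -
  have "0 \<le> (d * s - \<bar>t\<bar> * L)^2" by simp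
  then have "0 \<le> d^2 * s^2 - 2 * d * s * \<bar>t\<bar> * L + t^2 * L^2"
    by (simp add: power2_eq_square algebra_simps)
  then have "d * (2 * \<bar>t\<bar> * s * L - d * s^2) \<le> t^2 * L^2"
    by (simp add: power2_eq_square algebra_simps)
  then show ?thesis using assms(1) by (simp add: le_divide_eq mult.commute)
qed

lemma G_main:
  fixes x :: 'a and A :: "'a \<Rightarrow>\<^sub>L 'a"
  assumes xu: "norm x = 1"
  defines "\<alpha> \<equiv> inner x x0"
  defines "s \<equiv> norm (x - \<alpha> *\<^sub>R x0)"
  defines "c \<equiv> restr_norm T {x. inner x x0 = 0}"
  shows "(norm (blinfun_apply T x))^2 \<le> (norm T)^2 - ((norm T)^2 - c^2) * s^2"
    and "\<bar>inner (blinfun_apply A x) (blinfun_apply T x) - \<alpha>^2 * inner (blinfun_apply A x0) (blinfun_apply T x0)\<bar>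
           \<le> 3 * norm A * norm T * s"
    and "s \<le> 1" and "\<alpha>^2 = 1 - s^2"
proof -
  define y where "y = x - \<alpha> *\<^sub>R x0"
  have y0: "inner y x0 = 0" and nx: "1 = \<alpha>^2 + s^2"
    and tx: "(norm (blinfun_apply T x))^2 = \<alpha>^2 * (norm T)^2 + (norm (blinfun_apply T y))^2"
    using G_decomp[of x] xu unfolding y_def s_def \<alpha>_def by auto
  show a2: "\<alpha>^2 = 1 - s^2" using nx by simp
  have s0: "0 \<le> s" unfolding s_def by simp
  have "s^2 \<le> 1" using nx zero_le_power2[of \<alpha>] by linarith
  then show s1: "s \<le> 1" using s0 by (simp add: power_le_one_iff)
  have "\<alpha>^2 \<le> 1" using a2 zero_le_power2[of s] by linarith
  then have al: "\<bar>\<alpha>\<bar> \<le> 1" by (simp add: abs_square_le_1)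
  have c0: "0 \<le> c" unfolding c_def by (rule G_c0)
  have ty: "norm (blinfun_apply T y) \<le> c * s" using G_c[OF y0] unfolding c_def s_def y_def by simp
  then have "(norm (blinfun_apply T y))^2 \<le> (c * s)^2" by (intro power_mono) auto
  then show "(norm (blinfun_apply T x))^2 \<le> (norm T)^2 - ((norm T)^2 - c^2) * s^2"
    using tx a2 by (simp add: power_mult_distrib algebra_simps)
  have ty': "norm (blinfun_apply T y) \<le> norm T * s"
    using norm_blinfun[of T y] unfolding s_def y_def by (simp add: mult.commute)
  have ay: "norm (blinfun_apply A y) \<le> norm A * s"
    using norm_blinfun[of A y] unfolding s_def y_def by (simp add: mult.commute)
  have ax0: "norm (blinfun_apply A x0) \<le> norm A" using norm_blinfun[of A x0] x0 by simp
  have xe: "x = \<alpha> *\<^sub>R x0 + y" unfolding y_def by simp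
  have exp: "inner (blinfun_apply A x) (blinfun_apply T x) - \<alpha>^2 * inner (blinfun_apply A x0) (blinfun_apply T x0)
      = \<alpha> * inner (blinfun_apply A x0) (blinfun_apply T y) + \<alpha> * inner (blinfun_apply A y) (blinfun_apply T x0)
        + inner (blinfun_apply A y) (blinfun_apply T y)"
    by (subst (1 2) xe) (simp add: blinfun.add_right blinfun.scaleR_right inner_add_left inner_add_right power2_eq_square algebra_simps)
  have b1: "\<bar>\<alpha> * inner (blinfun_apply A x0) (blinfun_apply T y)\<bar> \<le> norm A * norm T * s"
  proof -
    have "\<bar>inner (blinfun_apply A x0) (blinfun_apply T y)\<bar> \<le> norm (blinfun_apply A x0) * norm (blinfun_apply T y)"
      by (rule Cauchy_Schwarz_ineq2)
    also have "\<dots> \<le> norm A * (norm T * s)" using ax0 ty' by (intro mult_mono) auto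
    finally have "\<bar>\<alpha>\<bar> * \<bar>inner (blinfun_apply A x0) (blinfun_apply T y)\<bar> \<le> 1 * (norm A * (norm T * s))"
      using al by (intro mult_mono) (auto intro!: mult_nonneg_nonneg s0)
    then show ?thesis by (simp add: abs_mult mult.assoc)
  qed
  have b2: "\<bar>\<alpha> * inner (blinfun_apply A y) (blinfun_apply T x0)\<bar> \<le> norm A * norm T * s"
  proof -
    have "\<bar>inner (blinfun_apply A y) (blinfun_apply T x0)\<bar> \<le> norm (blinfun_apply A y) * norm (blinfun_apply T x0)"
      by (rule Cauchy_Schwarz_ineq2)
    also have "\<dots> \<le> (norm A * s) * norm T" using ay G0 s0 by (intro mult_mono) auto
    finally have "\<bar>\<alpha>\<bar> * \<bar>inner (blinfun_apply A y) (blinfun_apply T x0)\<bar> \<le> 1 * ((norm A * s) * norm T)"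
      using al by (intro mult_mono) (auto intro!: mult_nonneg_nonneg s0)
    then show ?thesis by (simp add: abs_mult algebra_simps)
  qed
  have b3: "\<bar>inner (blinfun_apply A y) (blinfun_apply T y)\<bar> \<le> norm A * norm T * s"
  proof -
    have "\<bar>inner (blinfun_apply A y) (blinfun_apply T y)\<bar> \<le> norm (blinfun_apply A y) * norm (blinfun_apply T y)"
      by (rule Cauchy_Schwarz_ineq2)
    also have "\<dots> \<le> (norm A * s) * (norm T * s)" using ay ty' s0 by (intro mult_mono) auto
    also have "\<dots> = (norm A * norm T * s) * s" by simp
    also have "\<dots> \<le> norm A * norm T * s" using s1 s0 by (intro mult_left_le) auto
    finally show ?thesis .
  qed
  show "\<bar>inner (blinfun_apply A x) (blinfun_apply T x) - \<alpha>^2 * inner (blinfun_apply A x0) (blinfun_apply T x0)\<bar>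
           \<le> 3 * norm A * norm T * s"
    unfolding exp using b1 b2 b3 by linarith
qed

lemma G_K4:
  fixes A :: "'a \<Rightarrow>\<^sub>L 'a"
  shows "\<exists>C\<ge>0. \<forall>t. (norm (T + t *\<^sub>R A))^2 \<le> (norm T)^2
            + 2 * t * inner (blinfun_apply A x0) (blinfun_apply T x0) + C * t^2"
proof -
  define a where "a = inner (blinfun_apply A x0) (blinfun_apply T x0)"
  define c where "c = restr_norm T {x. inner x x0 = 0}"
  define d where "d = (norm T)^2 - c^2"
  define L where "L = 3 * norm A * norm T + \<bar>a\<bar>"
  define C where "C = L^2 / d + (norm A)^2"
  have c0: "0 \<le> c" unfolding c_def by (rule G_c0)
  have "c < norm T" unfolding c_def by (rule clt)
  then have "c^2 < (norm T)^2" using c0 by (intro power_strict_mono) auto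
  then have d0: "d > 0" unfolding d_def by simp
  have C0: "C \<ge> 0" unfolding C_def using d0 by auto
  have unit: "(norm (blinfun_apply (T + t *\<^sub>R A) x))^2 \<le> (norm T)^2 + 2 * t * a + C * t^2"
    if xu: "norm x = 1" for x t
  proof -
    define \<alpha> where "\<alpha> = inner x x0"
    define s where "s = norm (x - \<alpha> *\<^sub>R x0)"
    define p where "p = inner (blinfun_apply A x) (blinfun_apply T x)"
    have m1: "(norm (blinfun_apply T x))^2 \<le> (norm T)^2 - d * s^2"
      and m2: "\<bar>p - \<alpha>^2 * a\<bar> \<le> 3 * norm A * norm T * s"
      and m3: "s \<le> 1" and m4: "\<alpha>^2 = 1 - s^2"
      using G_main(1,3,4)[OF xu] G_main(2)[OF xu, of A] unfolding \<alpha>_def s_def p_def a_def d_def c_def by auto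
    have s0: "s \<ge> 0" unfolding s_def by simp
    have ax: "(norm (blinfun_apply A x))^2 \<le> (norm A)^2"
      using norm_sq_le_bound[of A x] xu by simp
    have e1: "(norm (blinfun_apply (T + t *\<^sub>R A) x))^2
        = (norm (blinfun_apply T x))^2 + 2 * t * p + t^2 * (norm (blinfun_apply A x))^2"
      unfolding blinfun.add_left blinfun.scaleR_left norm_add_sq p_def by (simp add: inner_commute power_mult_distrib)
    have e2: "t * p = t * a - t * s^2 * a + t * (p - \<alpha>^2 * a)"
      unfolding m4 by (simp add: algebra_simps)
    have "- (t * s^2 * a) \<le> \<bar>t\<bar> * s * \<bar>a\<bar>"
    proof -
      have "- (t * s^2 * a) \<le> \<bar>t * s^2 * a\<bar>" by simp
      also have "\<dots> = \<bar>t\<bar> * s^2 * \<bar>a\<bar>" by (simp add: abs_mult)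
      also have "\<dots> \<le> \<bar>t\<bar> * s * \<bar>a\<bar>"
        using m3 s0 by (intro mult_right_mono mult_left_mono) (auto simp: power2_eq_square mult_left_le)
      finally show ?thesis .
    qed
    moreover have "t * (p - \<alpha>^2 * a) \<le> \<bar>t\<bar> * (3 * norm A * norm T * s)"
    proof -
      have "t * (p - \<alpha>^2 * a) \<le> \<bar>t\<bar> * \<bar>p - \<alpha>^2 * a\<bar>" by (simp add: abs_mult[symmetric])
      also have "\<dots> \<le> \<bar>t\<bar> * (3 * norm A * norm T * s)" using m2 by (intro mult_left_mono) auto
      finally show ?thesis .
    qed
    ultimately have tp: "t * p \<le> t * a + \<bar>t\<bar> * s * L"
      unfolding L_def using e2 by (simp add: algebra_simps)
    have am: "2 * \<bar>t\<bar> * s * L - d * s^2 \<le> t^2 * L^2 / d" by (rule amgm_aux[OF d0 s0])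
    have "t^2 * (norm (blinfun_apply A x))^2 \<le> t^2 * (norm A)^2" using ax by (intro mult_left_mono) auto
    then show ?thesis using e1 m1 tp am unfolding C_def by (simp add: algebra_simps)
  qed
  have "(norm (T + t *\<^sub>R A))^2 \<le> (norm T)^2 + 2 * t * a + C * t^2" for t
  proof -
    let ?R = "(norm T)^2 + 2 * t * a + C * t^2"
    have R0: "0 \<le> ?R" using unit[OF x0, of t] by (meson order_trans zero_le_power2)
    have "norm (T + t *\<^sub>R A) \<le> sqrt ?R"
    proof (rule unit_bound)
      fix u :: 'a assume "norm u = 1"
      then have "(norm (blinfun_apply (T + t *\<^sub>R A) u))^2 \<le> ?R" by (rule unit)
      then show "norm (blinfun_apply (T + t *\<^sub>R A) u) \<le> sqrt ?R" by (simp add: real_le_rsqrt)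
    qed (use R0 in simp)
    then have "(norm (T + t *\<^sub>R A))^2 \<le> (sqrt ?R)^2" by (intro power_mono) auto
    then show ?thesis using R0 by simp
  qed
  then show ?thesis using C0 unfolding a_def by blast
qed

lemma G_smooth: "smooth_point T"
proof -
  have tau: "norm T > 0" by (rule G_tau)
  have Tx0x0: "inner (blinfun_apply T x0) (blinfun_apply T x0) = (norm T)^2"
    using G0 by (simp add: power2_norm_eq_inner[symmetric])
  define g where "g = (\<lambda>B :: 'a \<Rightarrow>\<^sub>L 'a. inner (blinfun_apply B x0) (blinfun_apply T x0) / norm T)"
  have gb: "norm (g B) \<le> norm B * 1" for B
  proof -
    have "\<bar>inner (blinfun_apply B x0) (blinfun_apply T x0)\<bar> \<le> norm (blinfun_apply B x0) * norm T"
      using Cauchy_Schwarz_ineq2[of "blinfun_apply B x0" "blinfun_apply T x0"] G0 by simp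
    also have "\<dots> \<le> norm B * norm T" using norm_blinfun[of B x0] x0 by (intro mult_right_mono) auto
    finally show "norm (g B) \<le> norm B * 1" unfolding g_def using tau by (simp add: divide_le_eq)
  qed
  have bl: "bounded_linear g"
  proof (rule bounded_linear_intro[where K=1])
    fix B1 B2 show "g (B1 + B2) = g B1 + g B2" unfolding g_def by (simp add: blinfun.add_left inner_add_left add_divide_distrib)
  next
    fix r and B show "g (r *\<^sub>R B) = r *\<^sub>R g B" unfolding g_def by (simp add: blinfun.scaleR_left)
  next
    fix B :: "'a \<Rightarrow>\<^sub>L 'a"
    have "\<bar>inner (blinfun_apply B x0) (blinfun_apply T x0)\<bar> \<le> norm (blinfun_apply B x0) * norm T"
      using Cauchy_Schwarz_ineq2[of "blinfun_apply B x0" "blinfun_apply T x0"] G0 by simp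
    also have "\<dots> \<le> norm B * norm T" using norm_blinfun[of B x0] x0 by (intro mult_right_mono) auto
    finally show "norm (g B) \<le> norm B * 1" unfolding g_def using tau by (simp add: divide_le_eq)
  qed
  define f0 where "f0 = Blinfun g"
  have f0a: "blinfun_apply f0 B = g B" for B unfolding f0_def using bl by (simp add: bounded_linear_Blinfun_apply)
  have f0T: "blinfun_apply f0 T = norm T" unfolding f0a g_def Tx0x0 using tau by (simp add: power2_eq_square)
  have "norm f0 \<le> 1"
  proof (rule norm_blinfun_bound)
    fix B show "norm (blinfun_apply f0 B) \<le> 1 * norm B" unfolding f0a
      using gb[of B] by simp
  qed simp
  moreover have "norm T \<le> norm f0 * norm T"
    using norm_blinfun[of f0 T] f0T by simp
  then have "1 \<le> norm f0" using tau by simp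
  ultimately have nf0: "norm f0 = 1" by simp
  have uniq: "f = f0" if nf: "norm f = 1" and fT: "blinfun_apply f T = norm T" for f :: "('a \<Rightarrow>\<^sub>L 'a) \<Rightarrow>\<^sub>L real"
  proof (rule blinfun_eqI)
    fix B :: "'a \<Rightarrow>\<^sub>L 'a"
    define a where "a = inner (blinfun_apply B x0) (blinfun_apply T x0)"
    define B' where "B' = B - (a / (norm T)^2) *\<^sub>R T"
    have aB': "inner (blinfun_apply B' x0) (blinfun_apply T x0) = 0"
      unfolding B'_def a_def using tau by (simp add: blinfun.diff_left blinfun.scaleR_left inner_diff_left Tx0x0)
    obtain C where C0: "C \<ge> 0" and C: "\<And>t. (norm (T + t *\<^sub>R B'))^2 \<le> (norm T)^2 + C * t^2"
      using G_K4[of B'] aB' by auto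
    have "t * (2 * norm T * blinfun_apply f B') \<le> C * t^2" for t
    proof -
      have lin: "blinfun_apply f (T + t *\<^sub>R B') = norm T + t * blinfun_apply f B'"
        by (simp add: blinfun.add_right blinfun.scaleR_right fT)
      have "blinfun_apply f (T + t *\<^sub>R B') \<le> norm f * norm (T + t *\<^sub>R B')"
        using norm_blinfun[of f "T + t *\<^sub>R B'"] by simp
      then have le: "norm T + t * blinfun_apply f B' \<le> norm (T + t *\<^sub>R B')" using lin nf by simp
      show ?thesis
      proof (cases "norm T + t * blinfun_apply f B' \<ge> 0")
        case True
        then have "(norm T + t * blinfun_apply f B')^2 \<le> (norm (T + t *\<^sub>R B'))^2"
          using le by (intro power_mono) auto
        with C[of t] have "(norm T + t * blinfun_apply f B')^2 \<le> (norm T)^2 + C * t^2" by linarith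
        then have "2 * norm T * (t * blinfun_apply f B') + (t * blinfun_apply f B')^2 \<le> C * t^2"
          by (simp add: power2_eq_square algebra_simps)
        then have "2 * norm T * (t * blinfun_apply f B') \<le> C * t^2"
          using zero_le_power2[of "t * blinfun_apply f B'"] by linarith
        then show ?thesis by (simp add: algebra_simps)
      next
        case False
        then have "t * blinfun_apply f B' < 0" using tau by linarith
        then have "norm T * (t * blinfun_apply f B') < 0" using tau by (simp add: mult_pos_neg)
        moreover have "C * t^2 \<ge> 0" using C0 by simp
        ultimately show ?thesis by (simp add: algebra_simps)
      qed
    qed
    then have "2 * norm T * blinfun_apply f B' = 0" by (intro lin_quad_zero) auto
    then have fB': "blinfun_apply f B' = 0" using tau by simp
    have "blinfun_apply f B = blinfun_apply f B' + (a / (norm T)^2) * blinfun_apply f T"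
      unfolding B'_def by (simp add: blinfun.diff_right blinfun.scaleR_right)
    also have "\<dots> = a / norm T" using fB' fT tau by (simp add: power2_eq_square)
    finally show "blinfun_apply f B = blinfun_apply f0 B" unfolding f0a g_def a_def .
  qed
  have "T \<noteq> 0" using tau by auto
  then show ?thesis unfolding smooth_point_def using nf0 f0T uniq by blast
qed

lemma G_iii:
  fixes A :: "'a \<Rightarrow>\<^sub>L 'a"
  shows "birkhoff_orth T A \<longleftrightarrow>
                   (\<forall>xs. norming_seq T xs \<longrightarrow>
                      (\<forall>l. subseq_limit (\<lambda>n. inner (blinfun_apply A (xs n)) (blinfun_apply T (xs n))) l
                             \<longrightarrow> l = 0))"
proof
  have tau: "norm T > 0" by (rule G_tau)
  define a where "a = inner (blinfun_apply A x0) (blinfun_apply T x0)"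
  assume orth: "birkhoff_orth T A"
  obtain C where C0: "C \<ge> 0" and C: "\<And>t. (norm (T + t *\<^sub>R A))^2 \<le> (norm T)^2 + 2 * t * a + C * t^2"
    using G_K4[of A] unfolding a_def by auto
  have "t * (- 2 * a) \<le> C * t^2" for t
  proof -
    have "norm T \<le> norm (T + t *\<^sub>R A)" using orth unfolding birkhoff_orth_def by blast
    then have "(norm T)^2 \<le> (norm (T + t *\<^sub>R A))^2" by (intro power_mono) auto
    with C[of t] have "(norm T)^2 \<le> (norm T)^2 + 2 * t * a + C * t^2" by linarith
    then show ?thesis by (simp add: algebra_simps)
  qed
  then have "- 2 * a = 0" by (rule lin_quad_zero)
  then have a0: "a = 0" by simp
  define c where "c = restr_norm T {x. inner x x0 = 0}"
  define d where "d = (norm T)^2 - c^2"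
  have c0: "0 \<le> c" unfolding c_def by (rule G_c0)
  have "c < norm T" unfolding c_def by (rule clt)
  then have "c^2 < (norm T)^2" using c0 by (intro power_strict_mono) auto
  then have d0: "d > 0" unfolding d_def by simp
  show "\<forall>xs. norming_seq T xs \<longrightarrow>
                      (\<forall>l. subseq_limit (\<lambda>n. inner (blinfun_apply A (xs n)) (blinfun_apply T (xs n))) l
                             \<longrightarrow> l = 0)"
  proof (intro allI impI)
    fix xs l assume ns: "norming_seq T xs"
      and sl: "subseq_limit (\<lambda>n. inner (blinfun_apply A (xs n)) (blinfun_apply T (xs n))) l"
    have u: "\<And>n. norm (xs n) = 1" using ns unfolding norming_seq_def by auto
    have Q0: "(\<lambda>n. Qf T (xs n)) \<longlonglongrightarrow> 0" by (rule norming_Qf_conv[OF ns])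
    have bnd: "norm (inner (blinfun_apply A (xs n)) (blinfun_apply T (xs n)))
        \<le> 3 * norm A * norm T * sqrt (Qf T (xs n) / d)" for n
    proof -
      define \<alpha> where "\<alpha> = inner (xs n) x0"
      define s where "s = norm (xs n - \<alpha> *\<^sub>R x0)"
      have m1: "(norm (blinfun_apply T (xs n)))^2 \<le> (norm T)^2 - d * s^2"
        and m2: "\<bar>inner (blinfun_apply A (xs n)) (blinfun_apply T (xs n)) - \<alpha>^2 * a\<bar> \<le> 3 * norm A * norm T * s"
        using G_main(1)[OF u[of n]] G_main(2)[OF u[of n], of A] unfolding \<alpha>_def s_def a_def d_def c_def by auto
      have "d * s^2 \<le> Qf T (xs n)" using m1 u[of n] unfolding Qf_def by simp
      then have "s^2 \<le> Qf T (xs n) / d" using d0 by (simp add: le_divide_eq mult.commute)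
      then have "sqrt (s^2) \<le> sqrt (Qf T (xs n) / d)" by (rule real_sqrt_le_mono)
      then have "s \<le> sqrt (Qf T (xs n) / d)" unfolding s_def by simp
      then have "3 * norm A * norm T * s \<le> 3 * norm A * norm T * sqrt (Qf T (xs n) / d)"
        by (intro mult_left_mono) auto
      then show ?thesis using m2 a0 by simp
    qed
    have "(\<lambda>n. 3 * norm A * norm T * sqrt (Qf T (xs n) / d)) \<longlonglongrightarrow> 3 * norm A * norm T * sqrt (0 / d)"
      using d0 by (intro tendsto_intros Q0) auto
    then have g0: "(\<lambda>n. 3 * norm A * norm T * sqrt (Qf T (xs n) / d)) \<longlonglongrightarrow> 0" by simp
    have lim0: "(\<lambda>n. inner (blinfun_apply A (xs n)) (blinfun_apply T (xs n))) \<longlonglongrightarrow> 0"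
      by (rule Lim_null_comparison[OF always_eventually g0]) (use bnd in blast)
    obtain r where r: "strict_mono r"
      and rl: "((\<lambda>n. inner (blinfun_apply A (xs n)) (blinfun_apply T (xs n))) \<circ> r) \<longlonglongrightarrow> l"
      using sl unfolding subseq_limit_def by blast
    have "((\<lambda>n. inner (blinfun_apply A (xs n)) (blinfun_apply T (xs n))) \<circ> r) \<longlonglongrightarrow> 0"
      by (rule LIMSEQ_subseq_LIMSEQ[OF lim0 r])
    then show "l = 0" using rl LIMSEQ_unique by blast
  qed
next
  assume H: "\<forall>xs. norming_seq T xs \<longrightarrow>
                      (\<forall>l. subseq_limit (\<lambda>n. inner (blinfun_apply A (xs n)) (blinfun_apply T (xs n))) l
                             \<longrightarrow> l = 0)"
  define a where "a = inner (blinfun_apply A x0) (blinfun_apply T x0)"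
  have "norming_seq T (\<lambda>n. x0)" unfolding norming_seq_def using x0 G0 by simp
  moreover have "subseq_limit (\<lambda>n. inner (blinfun_apply A ((\<lambda>n. x0) n)) (blinfun_apply T ((\<lambda>n. x0) n))) a"
    unfolding subseq_limit_def a_def by (rule exI[of _ id]) (simp add: strict_mono_id o_def)
  ultimately have a0: "a = 0" using H by blast
  show "birkhoff_orth T A" unfolding birkhoff_orth_def
  proof
    fix t :: real
    have "(norm (blinfun_apply (T + t *\<^sub>R A) x0))^2
        = (norm T)^2 + 2 * t * a + t^2 * (norm (blinfun_apply A x0))^2"
      unfolding blinfun.add_left blinfun.scaleR_left norm_add_sq a_def
      by (simp add: inner_commute power_mult_distrib G0)
    then have "(norm T)^2 \<le> (norm (blinfun_apply (T + t *\<^sub>R A) x0))^2" using a0 by simp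
    also have "\<dots> \<le> (norm (T + t *\<^sub>R A))^2" using unit_le_norm[OF x0] by (intro power_mono) auto
    finally show "norm T \<le> norm (T + t *\<^sub>R A)" by (rule power2_le_imp_le) simp
  qed
qed

end

definition bad :: "('a::real_inner \<Rightarrow>\<^sub>L 'a) \<Rightarrow> bool" where
  "bad T \<longleftrightarrow> (\<exists>A xs ys c. norming_seq T xs \<and> norming_seq T ys
     \<and> (\<lambda>n. inner (blinfun_apply A (xs n)) (blinfun_apply T (xs n))) \<longlonglongrightarrow> 0
     \<and> (\<lambda>n. inner (blinfun_apply A (ys n)) (blinfun_apply T (ys n))) \<longlonglongrightarrow> c \<and> c \<noteq> 0)"

lemma inner_unit_bound:
  fixes B T :: "'a::real_inner \<Rightarrow>\<^sub>L 'a"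
  assumes "norm z = 1"
  shows "\<bar>inner (blinfun_apply B z) (blinfun_apply T z)\<bar> \<le> norm B * norm T"
proof -
  have "\<bar>inner (blinfun_apply B z) (blinfun_apply T z)\<bar> \<le> norm (blinfun_apply B z) * norm (blinfun_apply T z)"
    by (rule Cauchy_Schwarz_ineq2)
  also have "\<dots> \<le> norm B * norm T"
    using unit_le_norm[OF assms, of B] unit_le_norm[OF assms, of T] by (intro mult_mono) auto
  finally show ?thesis .
qed

lemma BAD_iii:
  fixes T :: "'a::real_inner \<Rightarrow>\<^sub>L 'a"
  assumes "bad T"
  shows "\<not> (\<forall>A :: 'a \<Rightarrow>\<^sub>L 'a. birkhoff_orth T A \<longleftrightarrow>
                   (\<forall>xs. norming_seq T xs \<longrightarrow>
                      (\<forall>l. subseq_limit (\<lambda>n. inner (blinfun_apply A (xs n)) (blinfun_apply T (xs n))) l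
                             \<longrightarrow> l = 0)))"
proof
  obtain A xs ys c where nx: "norming_seq T xs" and ny: "norming_seq T ys"
    and lx: "(\<lambda>n. inner (blinfun_apply A (xs n)) (blinfun_apply T (xs n))) \<longlonglongrightarrow> 0"
    and ly: "(\<lambda>n. inner (blinfun_apply A (ys n)) (blinfun_apply T (ys n))) \<longlonglongrightarrow> c" and c: "c \<noteq> 0"
    using assms unfolding bad_def by blast
  assume H: "\<forall>A :: 'a \<Rightarrow>\<^sub>L 'a. birkhoff_orth T A \<longleftrightarrow>
                   (\<forall>xs. norming_seq T xs \<longrightarrow>
                      (\<forall>l. subseq_limit (\<lambda>n. inner (blinfun_apply A (xs n)) (blinfun_apply T (xs n))) l
                             \<longrightarrow> l = 0))"
  have ux: "\<And>n. norm (xs n) = 1" and tx: "(\<lambda>n. norm (blinfun_apply T (xs n))) \<longlonglongrightarrow> norm T"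
    using nx unfolding norming_seq_def by auto
  have orth: "birkhoff_orth T A" unfolding birkhoff_orth_def
  proof
    fix t :: real
    have lim: "(\<lambda>n. (norm (blinfun_apply T (xs n)))^2 + 2 * t * inner (blinfun_apply A (xs n)) (blinfun_apply T (xs n)))
        \<longlonglongrightarrow> (norm T)^2 + 2 * t * 0"
      by (intro tendsto_intros tx lx)
    have pt: "(norm (blinfun_apply T (xs n)))^2 + 2 * t * inner (blinfun_apply A (xs n)) (blinfun_apply T (xs n))
        \<le> (norm (T + t *\<^sub>R A))^2" for n
    proof -
      have "(norm (blinfun_apply (T + t *\<^sub>R A) (xs n)))^2
         = (norm (blinfun_apply T (xs n)))^2 + 2 * t * inner (blinfun_apply A (xs n)) (blinfun_apply T (xs n))
           + t^2 * (norm (blinfun_apply A (xs n)))^2"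
        unfolding blinfun.add_left blinfun.scaleR_left norm_add_sq
        by (simp add: inner_commute power_mult_distrib)
      moreover have "(norm (blinfun_apply (T + t *\<^sub>R A) (xs n)))^2 \<le> (norm (T + t *\<^sub>R A))^2"
        using unit_le_norm[OF ux[of n]] by (intro power_mono) auto
      moreover have "0 \<le> t^2 * (norm (blinfun_apply A (xs n)))^2" by simp
      ultimately show ?thesis by linarith
    qed
    have "\<exists>N. \<forall>n\<ge>N. (norm (blinfun_apply T (xs n)))^2 + 2 * t * inner (blinfun_apply A (xs n)) (blinfun_apply T (xs n))
        \<le> (norm (T + t *\<^sub>R A))^2" using pt by blast
    from LIMSEQ_le_const2[OF lim this] have "(norm T)^2 \<le> (norm (T + t *\<^sub>R A))^2" by simp
    then show "norm T \<le> norm (T + t *\<^sub>R A)" by (rule power2_le_imp_le) simp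
  qed
  have sc: "subseq_limit (\<lambda>n. inner (blinfun_apply A (ys n)) (blinfun_apply T (ys n))) c"
    unfolding subseq_limit_def by (rule exI[of _ id]) (simp add: strict_mono_id ly)
  from orth have R: "\<forall>xs. norming_seq T xs \<longrightarrow>
                      (\<forall>l. subseq_limit (\<lambda>n. inner (blinfun_apply A (xs n)) (blinfun_apply T (xs n))) l
                             \<longrightarrow> l = 0)" by (rule iffD1[OF spec[OF H, of A]])
  have "c = 0" by (rule R[rule_format, OF ny sc])
  with c show False by simp
qed

lemma BAD_i:
  fixes T :: "'a::real_inner \<Rightarrow>\<^sub>L 'a"
  assumes "bad T"
  shows "\<not> smooth_point T"
proof
  assume sm: "smooth_point T"
  then have T0: "T \<noteq> 0" and ex1: "\<exists>!f :: ('a \<Rightarrow>\<^sub>L 'a) \<Rightarrow>\<^sub>L real. norm f = 1 \<and> blinfun_apply f T = norm T"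
    unfolding smooth_point_def by (rule conjunct1, rule conjunct2)
  have tau: "norm T > 0" using T0 by simp
  obtain U where U: "ultra U" using ultra_exists by blast
  have nbU: "U \<noteq> bot" using U unfolding ultra_def by auto
  obtain A xs ys c where nx: "norming_seq T xs" and ny: "norming_seq T ys"
    and lx: "(\<lambda>n. inner (blinfun_apply A (xs n)) (blinfun_apply T (xs n))) \<longlonglongrightarrow> 0"
    and ly: "(\<lambda>n. inner (blinfun_apply A (ys n)) (blinfun_apply T (ys n))) \<longlonglongrightarrow> c" and c: "c \<noteq> 0"
    using assms unfolding bad_def by blast
  have func: "\<exists>f :: ('a \<Rightarrow>\<^sub>L 'a) \<Rightarrow>\<^sub>L real. norm f = 1 \<and> blinfun_apply f T = norm T \<and>
      (\<forall>B. blinfun_apply f B = ulim U (\<lambda>n. inner (blinfun_apply B (zs n)) (blinfun_apply T (zs n))) / norm T)"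
    if nz: "norming_seq T zs" for zs
  proof -
    have uz: "\<And>n. norm (zs n) = 1" and tz: "(\<lambda>n. norm (blinfun_apply T (zs n))) \<longlonglongrightarrow> norm T"
      using nz unfolding norming_seq_def by auto
    define s where "s = (\<lambda>B n. inner (blinfun_apply B (zs n)) (blinfun_apply T (zs n)))"
    define g where "g = (\<lambda>B. ulim U (s B) / norm T)"
    have sb: "\<bar>s B n\<bar> \<le> norm B * norm T" for B n unfolding s_def by (rule inner_unit_bound[OF uz])
    have st: "(s B \<longlongrightarrow> ulim U (s B)) U" for B by (rule ulim_tendsto[OF U sb])
    have gb: "norm (g B) \<le> norm B * 1" for B
    proof -
      have "((\<lambda>n. \<bar>s B n\<bar>) \<longlongrightarrow> \<bar>ulim U (s B)\<bar>) U" by (intro tendsto_intros st)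
      moreover have "\<forall>\<^sub>F n in U. \<bar>s B n\<bar> \<le> norm B * norm T" using sb by (intro always_eventually) blast
      moreover have "\<not> trivial_limit U" using nbU by simp
      ultimately have "\<bar>ulim U (s B)\<bar> \<le> norm B * norm T"
        by (rule tendsto_upperbound)
      then show ?thesis unfolding g_def using tau by (simp add: divide_le_eq)
    qed
    have bl: "bounded_linear g"
    proof (rule bounded_linear_intro[where K=1])
      fix B1 B2 :: "'a \<Rightarrow>\<^sub>L 'a"
      have "(s (B1 + B2) \<longlongrightarrow> ulim U (s B1) + ulim U (s B2)) U"
        using tendsto_add[OF st[of B1] st[of B2]] unfolding s_def by (simp add: blinfun.add_left inner_add_left)
      then have "ulim U (s (B1 + B2)) = ulim U (s B1) + ulim U (s B2)" by (rule ulim_eq[OF U])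
      then show "g (B1 + B2) = g B1 + g B2" unfolding g_def by (simp add: add_divide_distrib)
    next
      fix r and B :: "'a \<Rightarrow>\<^sub>L 'a"
      have "(s (r *\<^sub>R B) \<longlongrightarrow> r * ulim U (s B)) U"
        using tendsto_mult[OF tendsto_const[of r] st[of B]] unfolding s_def by (simp add: blinfun.scaleR_left)
      then have "ulim U (s (r *\<^sub>R B)) = r * ulim U (s B)" by (rule ulim_eq[OF U])
      then show "g (r *\<^sub>R B) = r *\<^sub>R g B" unfolding g_def by simp
    qed (rule gb)
    define f where "f = Blinfun g"
    have fa: "blinfun_apply f B = g B" for B unfolding f_def using bl by (simp add: bounded_linear_Blinfun_apply)
    have "(s T \<longlonglongrightarrow> (norm T)^2)"
      unfolding s_def using tendsto_power[OF tz, of 2] by (simp add: power2_norm_eq_inner)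
    then have "ulim U (s T) = (norm T)^2" by (intro ulim_eq[OF U] ultra_seq[OF U])
    then have fT: "blinfun_apply f T = norm T" unfolding fa g_def by (simp add: power2_eq_square)
    have "norm f \<le> 1" by (rule norm_blinfun_bound) (use gb fa in auto)
    moreover have "norm T \<le> norm f * norm T" using norm_blinfun[of f T] fT by simp
    then have "1 \<le> norm f" using tau by simp
    ultimately have "norm f = 1" by simp
    moreover have "\<forall>B. blinfun_apply f B = ulim U (\<lambda>n. inner (blinfun_apply B (zs n)) (blinfun_apply T (zs n))) / norm T"
      unfolding fa g_def s_def by simp
    ultimately show ?thesis using fT by blast
  qed
  obtain fx where fx: "norm fx = 1" "blinfun_apply fx T = norm T"
    "blinfun_apply fx A = ulim U (\<lambda>n. inner (blinfun_apply A (xs n)) (blinfun_apply T (xs n))) / norm T"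
    using func[OF nx] by blast
  obtain fy where fy: "norm fy = 1" "blinfun_apply fy T = norm T"
    "blinfun_apply fy A = ulim U (\<lambda>n. inner (blinfun_apply A (ys n)) (blinfun_apply T (ys n))) / norm T"
    using func[OF ny] by blast
  have "fx = fy" using ex1 fx(1,2) fy(1,2) by blast
  moreover have "blinfun_apply fx A = 0" using fx(3) ulim_eq[OF U ultra_seq[OF U lx]] by simp
  moreover have "blinfun_apply fy A = c / norm T" using fy(3) ulim_eq[OF U ultra_seq[OF U ly]] by simp
  ultimately show False using c tau by simp
qed

definition rank1 :: "'a::real_inner \<Rightarrow> 'a \<Rightarrow> 'a \<Rightarrow>\<^sub>L 'a" where
  "rank1 u v = Blinfun (\<lambda>z. inner z u *\<^sub>R v)"

lemma rank1_apply: "blinfun_apply (rank1 u v) z = inner z u *\<^sub>R v"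
proof -
  have "bounded_linear (\<lambda>z. inner z u *\<^sub>R v)"
    by (intro bounded_linear_compose[OF bounded_linear_scaleR_left] bounded_linear_inner_left)
  then show ?thesis unfolding rank1_def by (simp add: bounded_linear_Blinfun_apply)
qed

lemma norming_in_set:
  fixes T :: "'a::real_normed_vector \<Rightarrow>\<^sub>L 'b::real_normed_vector"
  assumes "\<And>e. e > 0 \<Longrightarrow> \<exists>y\<in>S. norm y = 1 \<and> norm T - e < norm (blinfun_apply T y)"
  shows "\<exists>xs. norming_seq T xs \<and> (\<forall>n. xs n \<in> S)"
proof -
  have "\<forall>n. \<exists>u. u \<in> S \<and> norm u = 1 \<and> norm T - inverse (real (Suc n)) < norm (blinfun_apply T u)"
    using assms by (metis inverse_positive_iff_positive of_nat_0_less_iff zero_less_Suc)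
  then obtain xs where xs: "\<And>n. xs n \<in> S" "\<And>n. norm (xs n) = 1"
    "\<And>n. norm T - inverse (real (Suc n)) < norm (blinfun_apply T (xs n))" by metis
  have "(\<lambda>n. norm (blinfun_apply T (xs n))) \<longlonglongrightarrow> norm T"
  proof (rule real_tendsto_sandwich)
    show "\<forall>\<^sub>F n in sequentially. norm T - inverse (real (Suc n)) \<le> norm (blinfun_apply T (xs n))"
      using xs(3) by (auto intro!: always_eventually less_imp_le)
    show "\<forall>\<^sub>F n in sequentially. norm (blinfun_apply T (xs n)) \<le> norm T"
      using unit_le_norm xs(2) by (auto intro!: always_eventually)
    show "(\<lambda>n. norm T - inverse (real (Suc n))) \<longlonglongrightarrow> norm T"
      using tendsto_diff[OF tendsto_const LIMSEQ_inverse_real_of_nat, of "norm T"] by simp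
  qed simp
  then show ?thesis using xs(1,2) unfolding norming_seq_def by blast
qed

lemma const_norming:
  assumes "x \<in> norm_attain T" shows "norming_seq T (\<lambda>n. x)"
  using assms unfolding norm_attain_def norming_seq_def by simp

lemma BAD_a:
  fixes T :: "'a::real_inner \<Rightarrow>\<^sub>L 'a"
  assumes T0: "T \<noteq> 0" and x1: "x1 \<in> norm_attain T" and x2: "x2 \<in> norm_attain T"
    and n1: "x2 \<noteq> x1" and n2: "x2 \<noteq> - x1"
  shows "bad T"
proof -
  have u1: "norm x1 = 1" and t1: "norm (blinfun_apply T x1) = norm T"
    and u2: "norm x2 = 1" using x1 x2 unfolding norm_attain_def by auto
  define \<beta> where "\<beta> = inner x1 x2"
  define u where "u = x1 - \<beta> *\<^sub>R x2"
  define A where "A = rank1 u (blinfun_apply T x1)"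
  have i11: "inner x1 x1 = 1" and i22: "inner x2 x2 = 1"
    using u1 u2 by (simp_all add: power2_norm_eq_inner[symmetric])
  have "inner x2 u = 0" unfolding u_def \<beta>_def by (simp add: inner_diff_right i22 inner_commute)
  then have lx: "(\<lambda>n. inner (blinfun_apply A x2) (blinfun_apply T x2)) \<longlonglongrightarrow> 0"
    unfolding A_def rank1_apply by simp
  have ix1u: "inner x1 u = 1 - \<beta>^2" unfolding u_def \<beta>_def
    by (simp add: inner_diff_right i11 power2_eq_square)
  have b1: "\<beta>^2 \<noteq> 1"
  proof
    assume b: "\<beta>^2 = 1"
    have "(norm u)^2 = inner x1 u - \<beta> * inner x2 u" unfolding power2_norm_eq_inner
      by (simp add: u_def inner_diff_left)
    also have "\<dots> = 0" using ix1u b \<open>inner x2 u = 0\<close> by simp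
    finally have "u = 0" by simp
    then have x1e: "x1 = \<beta> *\<^sub>R x2" unfolding u_def by simp
    from b have "\<beta> = 1 \<or> \<beta> = -1" by (metis power2_eq_1_iff)
    then show False using x1e n1 n2 by auto
  qed
  have ly: "(\<lambda>n. inner (blinfun_apply A x1) (blinfun_apply T x1)) \<longlonglongrightarrow> (1 - \<beta>^2) * (norm T)^2"
  proof -
    have "inner (blinfun_apply T x1) (blinfun_apply T x1) = (norm T)^2"
      using t1 by (simp add: power2_norm_eq_inner[symmetric])
    then show ?thesis unfolding A_def rank1_apply using ix1u by simp
  qed
  have "(1 - \<beta>^2) * (norm T)^2 \<noteq> 0" using b1 T0 by simp
  then show ?thesis unfolding bad_def
    using const_norming[OF x1] const_norming[OF x2] lx ly by blast
qed

lemma BAD_b: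
  fixes T :: "'a::real_inner \<Rightarrow>\<^sub>L 'a"
  assumes T0: "T \<noteq> 0" and x0: "x0 \<in> norm_attain T"
    and ge: "norm T \<le> restr_norm T {x. inner x x0 = 0}"
  shows "bad T"
proof -
  have u0: "norm x0 = 1" and t0: "norm (blinfun_apply T x0) = norm T"
    using x0 unfolding norm_attain_def by auto
  have tau: "norm T > 0" using T0 by simp
  let ?S = "{norm (blinfun_apply T x) | x. x \<in> {x. inner x x0 = 0} \<and> norm x \<le> 1}"
  have bdd: "bdd_above ?S"
    unfolding bdd_above_def
  proof (rule exI[of _ "norm T"], safe)
    fix x :: 'a assume "norm x \<le> 1"
    have "norm (blinfun_apply T x) \<le> norm T * norm x" by (rule norm_blinfun)
    also have "\<dots> \<le> norm T" using \<open>norm x \<le> 1\<close> by (simp add: mult_left_le)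
    finally show "norm (blinfun_apply T x) \<le> norm T" .
  qed
  have ne: "?S \<noteq> {}" by (auto intro!: exI[of _ 0])
  have "\<exists>y\<in>{y. inner y x0 = 0}. norm y = 1 \<and> norm T - e < norm (blinfun_apply T y)" if e: "e > 0" for e
  proof -
    define e' where "e' = min e (norm T / 2)"
    have h2: "norm T / 2 < norm T" "norm T / 2 > 0" using tau by auto
    have e': "e' > 0" "e' \<le> e" "e' < norm T" unfolding e'_def using e h2 by linarith+
    have "norm T - e' < Sup ?S" using ge e' unfolding restr_norm_def by simp
    then obtain x where x: "inner x x0 = 0" "norm x \<le> 1" "norm T - e' < norm (blinfun_apply T x)"
      using less_cSup_iff[OF ne bdd] by auto
    have "x \<noteq> 0" using x(3) e' by auto
    then have nx: "norm x > 0" by simp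
    define y where "y = x /\<^sub>R norm x"
    have "norm y = 1" unfolding y_def using nx by simp
    moreover have "inner y x0 = 0" unfolding y_def using x(1) by simp
    moreover have "norm (blinfun_apply T y) = norm (blinfun_apply T x) / norm x"
      unfolding y_def by (simp add: blinfun.scaleR_right divide_inverse_commute)
    moreover have "norm (blinfun_apply T x) \<le> norm (blinfun_apply T x) / norm x"
      using x(2) nx by (simp add: le_divide_eq mult_left_le)
    ultimately show ?thesis using x(3) e' by (intro bexI[of _ y]) auto
  qed
  then obtain xs where nx: "norming_seq T xs" and xs0: "\<And>n. inner (xs n) x0 = 0"
    using norming_in_set[where T=T and S="{y. inner y x0 = 0}"] by blast
  define A where "A = rank1 x0 (blinfun_apply T x0)"
  have lx: "(\<lambda>n. inner (blinfun_apply A (xs n)) (blinfun_apply T (xs n))) \<longlonglongrightarrow> 0"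
    unfolding A_def rank1_apply using xs0 by simp
  have ix0: "inner x0 x0 = 1" using u0 by (simp add: power2_norm_eq_inner[symmetric])
  have ly: "(\<lambda>n. inner (blinfun_apply A x0) (blinfun_apply T x0)) \<longlonglongrightarrow> (norm T)^2"
  proof -
    have "inner (blinfun_apply T x0) (blinfun_apply T x0) = (norm T)^2"
      using t0 by (simp add: power2_norm_eq_inner[symmetric])
    then show ?thesis unfolding A_def rank1_apply using ix0 by simp
  qed
  have "(norm T)^2 \<noteq> 0" using T0 by simp
  then show ?thesis unfolding bad_def using nx const_norming[OF x0] lx ly by blast
qed

definition orthonormal_seq :: "(nat \<Rightarrow> 'a::real_inner) \<Rightarrow> bool" where
  "orthonormal_seq g \<longleftrightarrow> (\<forall>k. norm (g k) = 1) \<and> (\<forall>i j. i \<noteq> j \<longrightarrow> inner (g i) (g j) = 0)"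

definition proj :: "(nat \<Rightarrow> 'a::real_inner) \<Rightarrow> 'a \<Rightarrow> 'a" where
  "proj g z = suminf (\<lambda>k. inner z (g k) *\<^sub>R g k)"

context
  fixes g :: "nat \<Rightarrow> 'a::{real_inner,complete_space}"
  assumes on: "orthonormal_seq g"
begin

lemma ig: "inner (g i) (g j) = (if i = j then 1 else 0)"
  using on unfolding orthonormal_seq_def by (auto simp: power2_norm_eq_inner[symmetric])

lemma S1: "finite I \<Longrightarrow> inner (\<Sum>k\<in>I. c k *\<^sub>R g k) (g j) = (if j \<in> I then c j else 0)"
proof -
  assume I: "finite I"
  have "inner (\<Sum>k\<in>I. c k *\<^sub>R g k) (g j) = (\<Sum>k\<in>I. c k * inner (g k) (g j))"
    by (simp add: inner_sum_left)
  also have "\<dots> = (\<Sum>k\<in>I. if k = j then c k else 0)" by (intro sum.cong) (auto simp: ig)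
  also have "\<dots> = (if j \<in> I then c j else 0)" using I by simp
  finally show ?thesis .
qed

lemma S2: "finite I \<Longrightarrow> (norm (\<Sum>k\<in>I. c k *\<^sub>R g k))^2 = (\<Sum>k\<in>I. (c k)^2)"
proof -
  assume I: "finite I"
  have "(norm (\<Sum>k\<in>I. c k *\<^sub>R g k))^2 = (\<Sum>j\<in>I. c j * inner (\<Sum>k\<in>I. c k *\<^sub>R g k) (g j))"
    by (simp add: power2_norm_eq_inner inner_sum_right)
  also have "\<dots> = (\<Sum>j\<in>I. (c j)^2)" using I by (intro sum.cong) (auto simp: S1 power2_eq_square)
  finally show ?thesis .
qed

lemma Bessel: "(\<Sum>k<n. (inner z (g k))^2) \<le> (norm z)^2"
proof -
  define p where "p = (\<Sum>k<n. inner z (g k) *\<^sub>R g k)"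
  have zp: "inner z p = (\<Sum>k<n. (inner z (g k))^2)" unfolding p_def
    by (simp add: inner_sum_right power2_eq_square)
  have pp: "(norm p)^2 = (\<Sum>k<n. (inner z (g k))^2)" unfolding p_def by (rule S2) simp
  have "0 \<le> (norm (z - p))^2" by simp
  also have "\<dots> = (norm z)^2 - 2 * inner z p + (norm p)^2" by (rule norm_diff_sq)
  finally show ?thesis using zp pp by simp
qed

lemma proj_summable: "summable (\<lambda>k. inner z (g k) *\<^sub>R g k)"
proof -
  have sc: "summable (\<lambda>k. (inner z (g k))^2)"
    by (rule summableI_nonneg_bounded[where x="(norm z)^2"]) (auto intro: Bessel)
  define S where "S = (\<lambda>n. \<Sum>k<n. inner z (g k) *\<^sub>R g k)"
  have "Cauchy S" unfolding Cauchy_def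
  proof (intro allI impI)
    fix e :: real assume e: "e > 0"
    then have "e^2 > 0" by simp
    then obtain N where N: "\<And>m n. m \<ge> N \<Longrightarrow> norm (\<Sum>k=m..<n. (inner z (g k))^2) < e^2"
      using sc unfolding summable_Cauchy by blast
    have key: "dist (S m) (S n) < e" if mn: "N \<le> n" "n \<le> m" for m n
    proof -
      have "(\<Sum>k=0..<n. inner z (g k) *\<^sub>R g k) + (\<Sum>k=n..<m. inner z (g k) *\<^sub>R g k)
          = (\<Sum>k=0..<m. inner z (g k) *\<^sub>R g k)"
        by (rule sum.atLeastLessThan_concat) (use mn in auto)
      then have "S m - S n = (\<Sum>k=n..<m. inner z (g k) *\<^sub>R g k)"
        unfolding S_def lessThan_atLeast0 by (simp add: algebra_simps)
      then have "(dist (S m) (S n))^2 = (\<Sum>k=n..<m. (inner z (g k))^2)"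
        by (simp add: dist_norm S2)
      also have "\<dots> < e^2" using N[OF mn(1), of m] by simp
      finally show ?thesis using e by (simp add: power_less_imp_less_base)
    qed
    show "\<exists>M. \<forall>m\<ge>M. \<forall>n\<ge>M. dist (S m) (S n) < e"
    proof (intro exI allI impI)
      fix m n assume "m \<ge> N" "n \<ge> N"
      show "dist (S m) (S n) < e"
      proof (cases "n \<le> m")
        case True then show ?thesis using key \<open>n \<ge> N\<close> by blast
      next
        case False then show ?thesis using key[of m n] \<open>m \<ge> N\<close> by (simp add: dist_commute)
      qed
    qed
  qed
  then have "convergent S" by (rule Cauchy_convergent)
  then obtain L where "S \<longlonglongrightarrow> L" unfolding convergent_def by blast
  then have "(\<lambda>k. inner z (g k) *\<^sub>R g k) sums L" unfolding sums_def S_def .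
  then show ?thesis by (rule sums_summable)
qed

lemma proj_sums: "(\<lambda>k. inner z (g k) *\<^sub>R g k) sums proj g z"
  unfolding proj_def by (rule summable_sums[OF proj_summable])

lemma proj_add: "proj g (x + y) = proj g x + proj g y"
proof -
  have "(\<lambda>k. inner (x + y) (g k) *\<^sub>R g k) sums (proj g x + proj g y)"
    using sums_add[OF proj_sums[of x] proj_sums[of y]] by (simp add: inner_add_left scaleR_add_left)
  then have "proj g x + proj g y = suminf (\<lambda>k. inner (x + y) (g k) *\<^sub>R g k)" by (rule sums_unique)
  then show ?thesis unfolding proj_def[of g "x + y"] by simp
qed

lemma proj_scale: "proj g (r *\<^sub>R x) = r *\<^sub>R proj g x"
proof -
  have "(\<lambda>k. inner (r *\<^sub>R x) (g k) *\<^sub>R g k) sums (r *\<^sub>R proj g x)"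
    using sums_scaleR_right[OF proj_sums[of x], of r] by simp
  then have "r *\<^sub>R proj g x = suminf (\<lambda>k. inner (r *\<^sub>R x) (g k) *\<^sub>R g k)" by (rule sums_unique)
  then show ?thesis unfolding proj_def[of g "r *\<^sub>R x"] by simp
qed

lemma proj_norm: "norm (proj g z) \<le> norm z"
proof -
  have "(\<lambda>n. \<Sum>k<n. inner z (g k) *\<^sub>R g k) \<longlonglongrightarrow> proj g z" using proj_sums unfolding sums_def .
  then have lim: "(\<lambda>n. norm (\<Sum>k<n. inner z (g k) *\<^sub>R g k)) \<longlonglongrightarrow> norm (proj g z)" by (rule tendsto_norm)
  have "norm (\<Sum>k<n. inner z (g k) *\<^sub>R g k) \<le> norm z" for n
  proof -
    have "(norm (\<Sum>k<n. inner z (g k) *\<^sub>R g k))^2 \<le> (norm z)^2" using S2[where I="{..<n}"] Bessel[where n=n and z=z] by simp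
    then show ?thesis by (rule power2_le_imp_le) simp
  qed
  then show ?thesis by (intro LIMSEQ_le_const2[OF lim]) auto
qed

lemma proj_bl: "bounded_linear (proj g)"
  by (rule bounded_linear_intro[where K=1]) (auto simp: proj_add proj_scale proj_norm)

lemma proj_g: "proj g (g j) = g j"
proof -
  have "(\<lambda>k. inner (g j) (g k) *\<^sub>R g k) = (\<lambda>k. if k = j then g k else 0)" by (auto simp: ig)
  then have "(\<lambda>k. inner (g j) (g k) *\<^sub>R g k) sums g j" using sums_single[of j g] by simp
  then have "g j = suminf (\<lambda>k. inner (g j) (g k) *\<^sub>R g k)" by (rule sums_unique)
  then show ?thesis unfolding proj_def[of g "g j"] by simp
qed

lemma proj_zero: "(\<And>k. inner w (g k) = 0) \<Longrightarrow> proj g w = 0"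
  unfolding proj_def by simp

end

lemma coord_subseq:
  fixes x :: "nat \<Rightarrow> 'a::real_inner"
  assumes F: "finite F" and u: "\<And>n. norm (x n) = 1"
  shows "\<exists>r. strict_mono r \<and> (\<forall>f\<in>F. convergent (\<lambda>n. inner (x (r n)) f))"
  using F
proof (induction F rule: finite_induct)
  case empty
  show ?case by (rule exI[of _ id]) (simp add: strict_mono_def)
next
  case (insert f F)
  then obtain r where r: "strict_mono r" and cF: "\<forall>g\<in>F. convergent (\<lambda>n. inner (x (r n)) g)" by blast
  define s where "s = (\<lambda>n. inner (x (r n)) f)"
  have "norm (s n) \<le> norm f" for n
    unfolding s_def using Cauchy_Schwarz_ineq2[of "x (r n)" f] u[of "r n"] by simp
  then have "bounded (range s)" unfolding bounded_iff by blast
  then obtain l r' where r': "strict_mono r'" and sl: "(s \<circ> r') \<longlonglongrightarrow> l"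
    using bounded_imp_convergent_subsequence by blast
  have "strict_mono (r \<circ> r')" using r r' by (rule strict_mono_o)
  moreover have "convergent (\<lambda>n. inner (x ((r \<circ> r') n)) g)" if "g \<in> insert f F" for g
  proof (cases "g = f")
    case True
    then show ?thesis using sl unfolding s_def convergent_def by (auto simp: o_def)
  next
    case False
    then have "g \<in> F" using that by simp
    then have "convergent ((\<lambda>n. inner (x (r n)) g) \<circ> r')"
      using cF convergent_subseq_convergent r' by blast
    then show ?thesis by (simp add: o_def)
  qed
  ultimately show ?case by blast
qed

lemma on_sum_inner:
  fixes F :: "'a::real_inner set"
  assumes F: "finite F" and un: "\<forall>f\<in>F. norm f = 1"
    and orth: "\<forall>f\<in>F. \<forall>g\<in>F. f \<noteq> g \<longrightarrow> inner f g = 0" and f: "f \<in> F"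
  shows "inner (\<Sum>g\<in>F. c g *\<^sub>R g) f = c f"
proof -
  have "inner (\<Sum>g\<in>F. c g *\<^sub>R g) f = (\<Sum>g\<in>F. c g * inner g f)" by (simp add: inner_sum_left)
  also have "\<dots> = (\<Sum>g\<in>F. if g = f then c g else 0)"
  proof (intro sum.cong refl)
    fix g assume "g \<in> F"
    show "c g * inner g f = (if g = f then c g else 0)"
    proof (cases "g = f")
      case True
      then have "inner g f = 1" using un f by (simp add: power2_norm_eq_inner[symmetric])
      then show ?thesis using True by simp
    next
      case False then show ?thesis using orth \<open>g \<in> F\<close> f by simp
    qed
  qed
  also have "\<dots> = c f" using F f by simp
  finally show ?thesis .
qed

lemma Qf_le_sq: "Qf T v \<le> (norm T)^2 * (norm v)^2"
  unfolding Qf_def by simp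

lemma Qf_neg: "Qf T (- v) = Qf T v"
  unfolding Qf_def by (simp add: blinfun.minus_right)

lemma step_lemma:
  fixes T :: "'a::{real_inner,complete_space} \<Rightarrow>\<^sub>L 'a"
  assumes T0: "T \<noteq> 0" and MT: "norm_attain T = {}" and F: "finite F"
    and un: "\<forall>f\<in>F. norm f = 1" and orth: "\<forall>f\<in>F. \<forall>g\<in>F. f \<noteq> g \<longrightarrow> inner f g = 0"
    and eps: "\<epsilon> > 0"
  shows "\<exists>e. norm e = 1 \<and> (\<forall>f\<in>F. inner e f = 0) \<and> Qf T e < \<epsilon>"
proof -
  have tau: "norm T > 0" using T0 by simp
  obtain xs where ns: "norming_seq T xs" using norming_exists[OF T0] by blast
  have uxs: "\<And>n. norm (xs n) = 1" and txs: "(\<lambda>n. norm (blinfun_apply T (xs n))) \<longlonglongrightarrow> norm T"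
    using ns unfolding norming_seq_def by auto
  obtain r where r: "strict_mono r" and cr: "\<forall>f\<in>F. convergent (\<lambda>n. inner (xs (r n)) f)"
    using coord_subseq[where F=F and x=xs, OF F uxs] by blast
  define x where "x = (\<lambda>n. xs (r n))"
  have ux: "\<And>n. norm (x n) = 1" unfolding x_def using uxs by simp
  have tx: "(\<lambda>n. norm (blinfun_apply T (x n))) \<longlonglongrightarrow> norm T"
    unfolding x_def using LIMSEQ_subseq_LIMSEQ[OF txs r] by (simp add: o_def)
  have Qx: "(\<lambda>n. Qf T (x n)) \<longlonglongrightarrow> 0"
    unfolding x_def using LIMSEQ_subseq_LIMSEQ[OF norming_Qf_conv[OF ns] r] by (simp add: o_def)
  define p where "p = (\<lambda>n. \<Sum>f\<in>F. inner (x n) f *\<^sub>R f)"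
  have "\<forall>f\<in>F. (\<lambda>n. inner (x n) f) \<longlonglongrightarrow> lim (\<lambda>n. inner (x n) f)"
    using cr unfolding x_def convergent_LIMSEQ_iff by blast
  then have "p \<longlonglongrightarrow> (\<Sum>f\<in>F. lim (\<lambda>n. inner (x n) f) *\<^sub>R f)"
    unfolding p_def by (intro tendsto_sum tendsto_scaleR tendsto_const) auto
  then have Cp: "Cauchy p" by (rule LIMSEQ_imp_Cauchy)
  have nC: "\<not> Cauchy x"
  proof
    assume "Cauchy x"
    then have "convergent x" by (rule Cauchy_convergent)
    then obtain z where xz: "x \<longlonglongrightarrow> z" unfolding convergent_def by blast
    have "(\<lambda>n. norm (x n)) \<longlonglongrightarrow> norm z" by (rule tendsto_norm[OF xz])
    then have "(\<lambda>n. 1::real) \<longlonglongrightarrow> norm z" using ux by simp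
    then have nz: "norm z = 1" using LIMSEQ_unique[OF tendsto_const] by metis
    have "(\<lambda>n. blinfun_apply T (x n)) \<longlonglongrightarrow> blinfun_apply T z"
      by (rule bounded_linear.tendsto[OF blinfun.bounded_linear_right xz])
    then have "(\<lambda>n. norm (blinfun_apply T (x n))) \<longlonglongrightarrow> norm (blinfun_apply T z)" by (rule tendsto_norm)
    then have "norm (blinfun_apply T z) = norm T" using tx LIMSEQ_unique by blast
    then have "z \<in> norm_attain T" unfolding norm_attain_def using nz by simp
    then show False using MT by simp
  qed
  then obtain \<delta> where d0: "\<delta> > 0" and dM: "\<And>M. \<exists>m\<ge>M. \<exists>n\<ge>M. \<delta> \<le> dist (x m) (x n)"
    unfolding Cauchy_def by (auto simp: not_less)
  define K where "K = 8 + 2 * (norm T)^2"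
  have K0: "K > 0" unfolding K_def by (simp add: add_pos_nonneg)
  define \<eta> where "\<eta> = min (\<delta>/2) (min 1 (\<epsilon> * \<delta>^2 / (8 * K)))"
  have e0: "\<eta> > 0" unfolding \<eta>_def using d0 eps K0 by auto
  have e1: "\<eta> \<le> \<delta>/2" "\<eta> \<le> 1" "\<eta> \<le> \<epsilon> * \<delta>^2 / (8 * K)" unfolding \<eta>_def by auto
  obtain N1 where N1: "\<And>m n. m \<ge> N1 \<Longrightarrow> n \<ge> N1 \<Longrightarrow> dist (p m) (p n) < \<eta>"
    using Cp e0 unfolding Cauchy_def by blast
  have "\<forall>\<^sub>F n in sequentially. Qf T (x n) < \<eta>" using order_tendstoD(2)[OF Qx e0] .
  then obtain N2 where N2: "\<And>n. n \<ge> N2 \<Longrightarrow> Qf T (x n) < \<eta>" unfolding eventually_sequentially by blast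
  obtain m n where mn: "m \<ge> max N1 N2" "n \<ge> max N1 N2" and dxy: "\<delta> \<le> dist (x m) (x n)"
    using dM by blast
  define d where "d = (x m - p m) - (x n - p n)"
  have dorth: "inner d f = 0" if "f \<in> F" for f
  proof -
    have "inner (p k) f = inner (x k) f" for k
      unfolding p_def by (rule on_sum_inner[OF F un orth that])
    then show ?thesis unfolding d_def by (simp add: inner_diff_left)
  qed
  have pmn: "norm (p m - p n) < \<eta>" using N1[of m n] mn by (simp add: dist_norm)
  have de: "d = (x m - x n) - (p m - p n)" unfolding d_def by (simp add: algebra_simps)
  have "norm (x m - x n) - norm (p m - p n) \<le> norm d" unfolding de by (rule norm_triangle_ineq2)
  then have nd: "\<delta> / 2 \<le> norm d" using dxy pmn e1(1) by (simp add: dist_norm)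
  then have nd0: "norm d > 0" using d0 by linarith
  have "Qf T (x m - x n) \<le> 2 * Qf T (x m) + 2 * Qf T (- x n)"
    using Qf_add_le[of T "x m" "- x n"] by simp
  also have "\<dots> < 4 * \<eta>" using N2[of m] N2[of n] mn by (simp add: Qf_neg)
  finally have q1: "Qf T (x m - x n) < 4 * \<eta>" .
  have "Qf T (p n - p m) \<le> (norm T)^2 * (norm (p n - p m))^2" by (rule Qf_le_sq)
  also have "\<dots> \<le> (norm T)^2 * \<eta>^2"
    using pmn by (intro mult_left_mono power_mono) (auto simp: norm_minus_commute)
  also have "\<dots> \<le> (norm T)^2 * \<eta>" using e0 e1(2) by (intro mult_left_mono) (auto simp: power2_eq_square mult_left_le)
  finally have q2: "Qf T (p n - p m) \<le> (norm T)^2 * \<eta>" .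
  have "d = (x m - x n) + (p n - p m)" unfolding d_def by (simp add: algebra_simps)
  then have "Qf T d \<le> 2 * Qf T (x m - x n) + 2 * Qf T (p n - p m)" using Qf_add_le by metis
  also have "\<dots> \<le> K * \<eta>" using q1 q2 unfolding K_def by (simp add: algebra_simps)
  finally have qd: "Qf T d \<le> K * \<eta>" .
  define e where "e = (1 / norm d) *\<^sub>R d"
  have ue: "norm e = 1" unfolding e_def using nd0 by simp
  have "Qf T e = Qf T d / (norm d)^2" unfolding e_def Qf_scale by (simp add: power_divide)
  also have "\<dots> \<le> K * \<eta> / (\<delta>/2)^2"
  proof (rule frac_le)
    show "0 \<le> K * \<eta>" using K0 e0 by simp
    show "Qf T d \<le> K * \<eta>" by (rule qd)
    show "0 < (\<delta>/2)^2" using d0 by simp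
    show "(\<delta>/2)^2 \<le> (norm d)^2" using nd d0 by (intro power_mono) auto
  qed
  also have "\<dots> = 4 * K * \<eta> / \<delta>^2" by (simp add: power_divide)
  also have "\<dots> \<le> 4 * K * (\<epsilon> * \<delta>^2 / (8 * K)) / \<delta>^2"
    using e1(3) K0 d0 by (intro divide_right_mono mult_left_mono) auto
  also have "\<dots> = \<epsilon> / 2" using K0 d0 by (simp add: field_simps)
  also have "\<dots> < \<epsilon>" using eps by simp
  finally have "Qf T e < \<epsilon>" .
  moreover have "\<forall>f\<in>F. inner e f = 0" unfolding e_def using dorth by simp
  ultimately show ?thesis using ue by blast
qed

definition stepf :: "('a::real_inner \<Rightarrow>\<^sub>L 'a) \<Rightarrow> 'a list \<Rightarrow> nat \<Rightarrow> 'a" where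
  "stepf T L k = (SOME e. norm e = 1 \<and> (\<forall>f\<in>set L. inner e f = 0) \<and> Qf T e < inverse (real (Suc k)))"

primrec es :: "('a::real_inner \<Rightarrow>\<^sub>L 'a) \<Rightarrow> nat \<Rightarrow> 'a list" where
  "es T 0 = []"
| "es T (Suc k) = es T k @ [stepf T (es T k) k]"

definition eseq :: "('a::real_inner \<Rightarrow>\<^sub>L 'a) \<Rightarrow> nat \<Rightarrow> 'a" where
  "eseq T k = stepf T (es T k) k"

lemma es_map: "es T k = map (eseq T) [0..<k]"
  by (induction k) (simp_all add: eseq_def)

lemma eseq_props:
  fixes T :: "'a::{real_inner,complete_space} \<Rightarrow>\<^sub>L 'a"
  assumes T0: "T \<noteq> 0" and MT: "norm_attain T = {}"
  shows "(\<forall>i<k. norm (eseq T i) = 1 \<and> Qf T (eseq T i) < inverse (real (Suc i)))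
       \<and> (\<forall>i j. i < k \<longrightarrow> j < k \<longrightarrow> i \<noteq> j \<longrightarrow> inner (eseq T i) (eseq T j) = 0)"
proof (induction k)
  case 0 then show ?case by simp
next
  case (Suc k)
  have setk: "set (es T k) = eseq T ` {..<k}" unfolding es_map by auto
  have fin: "finite (set (es T k))" by simp
  have un: "\<forall>f\<in>set (es T k). norm f = 1" using Suc.IH unfolding setk by auto
  have orth: "\<forall>f\<in>set (es T k). \<forall>g\<in>set (es T k). f \<noteq> g \<longrightarrow> inner f g = 0"
    using Suc.IH unfolding setk by auto
  let ?Q = "\<lambda>e. norm e = 1 \<and> (\<forall>f\<in>set (es T k). inner e f = 0) \<and> Qf T e < inverse (real (Suc k))"
  have ex: "\<exists>e. ?Q e"
    by (rule step_lemma[OF T0 MT fin un orth]) simp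
  have "?Q (SOME e. ?Q e)" by (rule someI_ex[OF ex])
  moreover have "eseq T k = (SOME e. ?Q e)" unfolding eseq_def stepf_def ..
  ultimately have P: "?Q (eseq T k)" by simp
  have o1: "inner (eseq T k) (eseq T i) = 0" if "i < k" for i
    using P that unfolding setk by auto
  have A1: "\<forall>i<Suc k. norm (eseq T i) = 1 \<and> Qf T (eseq T i) < inverse (real (Suc i))"
  proof (intro allI impI)
    fix i assume "i < Suc k"
    then show "norm (eseq T i) = 1 \<and> Qf T (eseq T i) < inverse (real (Suc i))"
      using Suc.IH P by (cases "i = k") auto
  qed
  show ?case
  proof (rule conjI[OF A1], intro allI impI)
    fix i j assume ij: "i < Suc k" "j < Suc k" "i \<noteq> j"
    show "inner (eseq T i) (eseq T j) = 0"
    proof (cases "i = k")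
      case True then show ?thesis using ij o1[of j] by simp
    next
      case False
      show ?thesis
      proof (cases "j = k")
        case True then show ?thesis using ij o1[of i] False by (simp add: inner_commute)
      next
        case False2: False
        then show ?thesis using Suc.IH ij False by auto
      qed
    qed
  qed
qed

lemma eseq_on:
  fixes T :: "'a::{real_inner,complete_space} \<Rightarrow>\<^sub>L 'a"
  assumes T0: "T \<noteq> 0" and MT: "norm_attain T = {}"
  shows "orthonormal_seq (eseq T)" and "\<And>k. Qf T (eseq T k) < inverse (real (Suc k))"
proof -
  show "orthonormal_seq (eseq T)" unfolding orthonormal_seq_def
  proof (intro conjI allI impI)
    fix k show "norm (eseq T k) = 1" using eseq_props[OF T0 MT, of "Suc k"] by simp
  next
    fix i j :: nat assume "i \<noteq> j"
    then show "inner (eseq T i) (eseq T j) = 0" using eseq_props[OF T0 MT, of "Suc (max i j)"] by auto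
  qed
  fix k show "Qf T (eseq T k) < inverse (real (Suc k))" using eseq_props[OF T0 MT, of "Suc k"] by simp
qed

lemma BAD_c:
  fixes T :: "'a::{real_inner,complete_space} \<Rightarrow>\<^sub>L 'a"
  assumes T0: "T \<noteq> 0" and MT: "norm_attain T = {}"
  shows "bad T"
proof -
  define e where "e = eseq T"
  have one: "orthonormal_seq e" and Qe: "\<And>k. Qf T (e k) < inverse (real (Suc k))"
    using eseq_on[OF T0 MT] unfolding e_def by auto
  have ue: "\<And>k. norm (e k) = 1" and oe: "\<And>i j. i \<noteq> j \<Longrightarrow> inner (e i) (e j) = 0"
    using one unfolding orthonormal_seq_def by auto
  define g where "g = (\<lambda>k. e (2 * k))"
  have ong: "orthonormal_seq g" unfolding g_def orthonormal_seq_def using ue oe by auto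
  have Pbl: "bounded_linear (proj g)" by (rule proj_bl[OF ong])
  define A where "A = T o\<^sub>L (id_blinfun - 2 *\<^sub>R Blinfun (proj g))"
  have Aap: "blinfun_apply A z = blinfun_apply T (z - 2 *\<^sub>R proj g z)" for z
    unfolding A_def using Pbl by (simp add: bounded_linear_Blinfun_apply blinfun.diff_left blinfun.scaleR_left)
  have Podd: "proj g (e (2 * n + 1)) = 0" for n
  proof (rule proj_zero[OF ong])
    fix k show "inner (e (2 * n + 1)) (g k) = 0" unfolding g_def by (rule oe) presburger
  qed
  have Peven: "proj g (e (2 * n)) = e (2 * n)" for n
    using proj_g[OF ong, of n] unfolding g_def .
  have Aodd: "blinfun_apply A (e (2 * n + 1)) = blinfun_apply T (e (2 * n + 1))" for n
    unfolding Aap Podd by simp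
  have Aeven: "blinfun_apply A (e (2 * n)) = - blinfun_apply T (e (2 * n))" for n
    unfolding Aap Peven by (simp add: blinfun.diff_right blinfun.scaleR_right blinfun.minus_right scaleR_2)
  have Tsq: "(norm (blinfun_apply T (e k)))^2 = (norm T)^2 - Qf T (e k)" for k
    by (rule Qf_unit[OF ue])
  have Qbound: "Qf T (e (2 * n + i)) \<le> inverse (real (Suc n))" for n i
  proof -
    have "Qf T (e (2 * n + i)) < inverse (real (Suc (2 * n + i)))" by (rule Qe)
    also have "\<dots> \<le> inverse (real (Suc n))" by (rule le_imp_inverse_le) auto
    finally show ?thesis by simp
  qed
  have Q0: "\<And>k. 0 \<le> Qf T (e k)" by (rule Qf_nonneg)
  have lim_inv: "(\<lambda>n. inverse (real (Suc n))) \<longlonglongrightarrow> 0" by (rule LIMSEQ_inverse_real_of_nat)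
  have Qi: "(\<lambda>n. Qf T (e (2 * n + i))) \<longlonglongrightarrow> 0" for i
    by (rule real_tendsto_sandwich[OF always_eventually always_eventually tendsto_const lim_inv])
       (use Q0 Qbound in auto)
  define ys where "ys = (\<lambda>n. e (2 * n + 1))"
  have nys: "norming_seq T ys" unfolding ys_def by (rule norming_Qf[OF ue Qi])
  have lys: "(\<lambda>n. inner (blinfun_apply A (ys n)) (blinfun_apply T (ys n))) \<longlonglongrightarrow> (norm T)^2 - 0"
  proof -
    have "inner (blinfun_apply A (ys n)) (blinfun_apply T (ys n)) = (norm T)^2 - Qf T (e (2 * n + 1))" for n
      unfolding ys_def Aodd using Tsq by (simp add: power2_norm_eq_inner)
    then show ?thesis using tendsto_diff[OF tendsto_const Qi[of 1]] by simp
  qed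
  define xs where "xs = (\<lambda>n. (1 / sqrt 2) *\<^sub>R (e (2 * n + 1) + e (2 * n)))"
  have uxs: "norm (xs n) = 1" for n
  proof -
    have "(norm (e (2 * n + 1) + e (2 * n)))^2 = 2"
      unfolding norm_add_sq using ue oe[of "2 * n + 1" "2 * n"] by simp
    then have "(norm (xs n))^2 = 1" unfolding xs_def by (simp add: power_mult_distrib power_divide)
    then have "norm (xs n) = 1 \<or> norm (xs n) = - 1" by (simp add: power2_eq_1_iff)
    moreover have "norm (xs n) \<ge> 0" by simp
    ultimately show ?thesis by linarith
  qed
  have Qxb: "Qf T (xs n) \<le> Qf T (e (2 * n + 1)) + Qf T (e (2 * n + 0))" for n
  proof -
    have "Qf T (xs n) = (1/2) * Qf T (e (2 * n + 1) + e (2 * n))"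
      unfolding xs_def Qf_scale by (simp add: power_divide)
    also have "\<dots> \<le> (1/2) * (2 * Qf T (e (2 * n + 1)) + 2 * Qf T (e (2 * n)))"
      by (intro mult_left_mono Qf_add_le) auto
    finally show ?thesis by simp
  qed
  have Qxs: "(\<lambda>n. Qf T (xs n)) \<longlonglongrightarrow> 0"
  proof (rule real_tendsto_sandwich[OF always_eventually always_eventually tendsto_const])
    show "(\<lambda>n. Qf T (e (2 * n + 1)) + Qf T (e (2 * n + 0))) \<longlonglongrightarrow> 0"
      using tendsto_add[OF Qi[of 1] Qi[of 0]] by simp
    show "\<forall>n. 0 \<le> Qf T (xs n)" by (simp add: Qf_nonneg)
    show "\<forall>n. Qf T (xs n) \<le> Qf T (e (2 * n + 1)) + Qf T (e (2 * n + 0))" using Qxb by blast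
  qed
  have nxs: "norming_seq T xs" by (rule norming_Qf[OF uxs Qxs])
  have lxs: "(\<lambda>n. inner (blinfun_apply A (xs n)) (blinfun_apply T (xs n))) \<longlonglongrightarrow> 0"
  proof -
    have eq: "inner (blinfun_apply A (xs n)) (blinfun_apply T (xs n))
        = (Qf T (e (2 * n + 0)) - Qf T (e (2 * n + 1))) / 2" for n
    proof -
      let ?v = "blinfun_apply T (e (2 * n + 1))" and ?w = "blinfun_apply T (e (2 * n))"
      have "inner (blinfun_apply A (xs n)) (blinfun_apply T (xs n))
          = (1 / sqrt 2) * (1 / sqrt 2) * inner (?v - ?w) (?v + ?w)"
        unfolding xs_def by (simp add: blinfun.scaleR_right blinfun.add_right Aodd[simplified] Aeven)
      also have "\<dots> = (1/2) * (inner ?v ?v - inner ?w ?w)"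
      proof -
        have i: "inner (?v - ?w) (?v + ?w) = inner ?v ?v - inner ?w ?w"
          using inner_commute[of ?w ?v] by (simp add: inner_diff_left inner_add_right)
        have "(1 / sqrt 2) * (1 / sqrt 2) = (1/2::real)" by simp
        then show ?thesis unfolding i by simp
      qed
      also have "\<dots> = (1/2) * ((norm ?v)^2 - (norm ?w)^2)" by (simp add: power2_norm_eq_inner)
      also have "\<dots> = (Qf T (e (2 * n + 0)) - Qf T (e (2 * n + 1))) / 2"
        using Tsq[of "2 * n + 1"] Tsq[of "2 * n"] by simp
      finally show ?thesis .
    qed
    have lim: "(\<lambda>n. (Qf T (e (2 * n + 0)) - Qf T (e (2 * n + 1))) / 2) \<longlonglongrightarrow> (0 - 0) / 2"
      by (intro tendsto_intros Qi) simp
    show ?thesis unfolding eq using lim by simp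
  qed
  have "(norm T)^2 - 0 \<noteq> 0" using T0 by simp
  then show ?thesis unfolding bad_def using nxs nys lxs lys by blast
qed

lemma not_ii_bad:
  fixes T :: "'a::{real_inner,complete_space} \<Rightarrow>\<^sub>L 'a"
  assumes T0: "T \<noteq> 0"
    and nii: "\<not> (\<exists>x0. norm x0 = 1 \<and> norm_attain T = {x0, - x0}
                     \<and> restr_norm T {x. inner x x0 = 0} < norm T)"
  shows "bad T"
proof (cases "norm_attain T = {}")
  case True then show ?thesis by (rule BAD_c[OF T0])
next
  case False
  then obtain x0 where x0: "x0 \<in> norm_attain T" by blast
  show ?thesis
  proof (cases "\<exists>x2\<in>norm_attain T. x2 \<noteq> x0 \<and> x2 \<noteq> - x0")
    case True
    then obtain x2 where "x2 \<in> norm_attain T" "x2 \<noteq> x0" "x2 \<noteq> - x0" by blast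
    then show ?thesis using BAD_a[OF T0 x0] by blast
  next
    case False
    have u0: "norm x0 = 1" using x0 unfolding norm_attain_def by simp
    have "- x0 \<in> norm_attain T" using x0 unfolding norm_attain_def by (simp add: blinfun.minus_right)
    then have "norm_attain T = {x0, - x0}" using False x0 by blast
    then have "\<not> restr_norm T {x. inner x x0 = 0} < norm T" using nii u0 by blast
    then show ?thesis using BAD_b[OF T0 x0] by simp
  qed
qed

theorem theorem3p2:
  fixes T :: "'a::{real_inner, complete_space} \<Rightarrow>\<^sub>L 'a"
  assumes "T \<noteq> 0"
  shows "(smooth_point T
            \<longleftrightarrow> (\<exists>x0. norm x0 = 1 \<and> norm_attain T = {x0, - x0}
                     \<and> restr_norm T {x. inner x x0 = 0} < norm T))
       \<and> (smooth_point T
            \<longleftrightarrow> (\<forall>A :: 'a \<Rightarrow>\<^sub>L 'a. birkhoff_orth T A \<longleftrightarrow>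
                   (\<forall>xs. norming_seq T xs \<longrightarrow>
                      (\<forall>l. subseq_limit (\<lambda>n. inner (blinfun_apply A (xs n)) (blinfun_apply T (xs n))) l
                             \<longrightarrow> l = 0))))"
proof -
  let ?ii = "\<exists>x0. norm x0 = 1 \<and> norm_attain T = {x0, - x0}
                     \<and> restr_norm T {x. inner x x0 = 0} < norm T"
  let ?iii = "\<forall>A :: 'a \<Rightarrow>\<^sub>L 'a. birkhoff_orth T A \<longleftrightarrow>
                   (\<forall>xs. norming_seq T xs \<longrightarrow>
                      (\<forall>l. subseq_limit (\<lambda>n. inner (blinfun_apply A (xs n)) (blinfun_apply T (xs n))) l
                             \<longrightarrow> l = 0))"
  have ii_i: "smooth_point T" if ?ii
    using that G_smooth by blast
  have ii_iii: ?iii if ?ii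
    using that G_iii by blast
  have i_ii: ?ii if "smooth_point T"
    using that not_ii_bad[OF assms] BAD_i by blast
  have iii_ii: ?ii if ?iii
    using that not_ii_bad[OF assms] BAD_iii by blast
  show ?thesis using ii_i ii_iii i_ii iii_ii by blast
qed

end
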